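(* Let $w\in\mathcal S_n$ and $a\in\mathrm R(w)$. Then $d([a_{\min}],[a])=t(a_{\min},a)=|\mathrm{sup}(a)|$ and $d([a],[a_{\max}])=t(a,a_{\max})=|\mathrm T_w|-|\mathrm{sup}(a)|$. In particular $d([a_{\min}],[a_{\max}])=|\mathrm T_w|$.
   Context: Permutations are in one-line notation; $\mathrm{Des}(u)=\{i:u_i>u_{i+1}\}$. A word $a=a_1\cdots a_\ell$ with letters in $\{1,\dots,n-1\}$ acts on a word of length $n$ by successively swapping the entries in positions $a_j$ and $a_j+1$. $\mathrm R(w)$: reduced words of $w$ (length $\ell(w)$ = number of inversions, action on $12\cdots n$ yields $w$). Commutation: replace a factor $ij$, $|i-j|\ge2$, by $ji$; long braid relation: replace $i(i+1)i$ by $(i+1)i(i+1)$ or vice versa; $[a]$ is the commutation class of $a$. $C(w)$: vertices are commutation classes, $[a]\ne[b]$ adjacent if some $a'\in[a]$, $b'\in[b]$ differ by one long braid relation; $d$ is its graph distance. $a_{\min}$ (resp. $a_{\max}$): set $w^0=w$, for $j=0,\dots,\ell(w)-1$ let $i_j$ be the smallest (resp. largest) element of $\mathrm{Des}(w^j)$ and obtain $w^{j+1}$ by swapping entries in positions $i_j,i_j+1$; the word is $i_{\ell(w)-1}\cdots i_0$. For an inversion $(p,q)$ of $w$, $P_a(p,q)$ is the index of the step of $a$ swapping $p$ and $q$. $\mathrm T_w$: triples $(x,y,z)$, $x<y<z$, with $z,y,x$ in this order in $w$. $\Gamma(a,(x,y,z))=1$ if $P_a(y,x)>P_a(z,y)$,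 else $0$. $t(a,b)$ is the number of triples $\tau\in\mathrm T_w$ with $\Gamma(a,\tau)\ne\Gamma(b,\tau)$. $\mathrm{sup}(a)=\{\tau\in\mathrm T_w:\Gamma(a,\tau)=1\}$. *)

theory Defs
  imports Main
begin

text \<open>Permutations of {1..n} in one-line notation are lists; positions are 1-indexed
  in the mathematics, list indices are 0-based.\<close>

definition is_perm :: "nat \<Rightarrow> nat list \<Rightarrow> bool" where
  "is_perm n w \<longleftrightarrow> length w = n \<and> set w = {1..n}"

definition id_word :: "nat \<Rightarrow> nat list" where
  "id_word n = [1..<n+1]"

definition swap_at :: "nat \<Rightarrow> nat list \<Rightarrow> nat list" where
  "swap_at i u = u[i - 1 := u ! i, i := u ! (i - 1)]"

definition act :: "nat list \<Rightarrow> nat list \<Rightarrow> nat list" where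
  "act a u = fold swap_at a u"

definition ninv :: "nat list \<Rightarrow> nat" where
  "ninv w = card {(i, j). i < j \<and> j < length w \<and> w ! i > w ! j}"

definition Des :: "nat list \<Rightarrow> nat set" where
  "Des u = {i. 1 \<le> i \<and> i < length u \<and> u ! (i - 1) > u ! i}"

definition reduced_words :: "nat \<Rightarrow> nat list \<Rightarrow> nat list set" where
  "reduced_words n w = {a. set a \<subseteq> {1..n - 1} \<and> length a = ninv w \<and> act a (id_word n) = w}"

inductive comm_step :: "nat list \<Rightarrow> nat list \<Rightarrow> bool" where
  "(i \<ge> j + 2 \<or> j \<ge> i + 2) \<Longrightarrow> comm_step (xs @ [i, j] @ ys) (xs @ [j, i] @ ys)"

definition comm_class :: "nat list \<Rightarrow> nat list set" where
  "comm_class a = {b. comm_step\<^sup>*\<^sup>* a b}"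

inductive braid_step :: "nat list \<Rightarrow> nat list \<Rightarrow> bool" where
  "braid_step (xs @ [i, i + 1, i] @ ys) (xs @ [i + 1, i, i + 1] @ ys)"
| "braid_step (xs @ [i + 1, i, i + 1] @ ys) (xs @ [i, i + 1, i] @ ys)"

definition C_vertices :: "nat \<Rightarrow> nat list \<Rightarrow> nat list set set" where
  "C_vertices n w = comm_class ` reduced_words n w"

definition C_adj :: "nat \<Rightarrow> nat list \<Rightarrow> nat list set \<Rightarrow> nat list set \<Rightarrow> bool" where
  "C_adj n w A B \<longleftrightarrow> A \<in> C_vertices n w \<and> B \<in> C_vertices n w \<and> A \<noteq> B \<and>
     (\<exists>a\<in>A. \<exists>b\<in>B. braid_step a b)"

definition C_dist :: "nat \<Rightarrow> nat list \<Rightarrow> nat list set \<Rightarrow> nat list set \<Rightarrow> nat" where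
  "C_dist n w A B = (LEAST k. (C_adj n w ^^ k) A B)"

text \<open>a_min / a_max: the greedy words; step produces [i_{l-1},...,i_0].\<close>
fun greedy_aux :: "(nat set \<Rightarrow> nat) \<Rightarrow> nat \<Rightarrow> nat list \<Rightarrow> nat list" where
  "greedy_aux sel 0 u = []"
| "greedy_aux sel (Suc k) u = (let i = sel (Des u) in greedy_aux sel k (swap_at i u) @ [i])"

definition a_min :: "nat list \<Rightarrow> nat list" where
  "a_min w = greedy_aux Min (ninv w) w"

definition a_max :: "nat list \<Rightarrow> nat list" where
  "a_max w = greedy_aux Max (ninv w) w"

text \<open>P_a(p,q): the (1-based) index of the step of a (acting on 12...n) that swaps p and q.\<close>
definition P_step :: "nat \<Rightarrow> nat list \<Rightarrow> nat \<Rightarrow> nat \<Rightarrow> nat" where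
  "P_step n a p q = (LEAST j. 1 \<le> j \<and> j \<le> length a \<and>
     (let u = act (take (j - 1) a) (id_word n); k = a ! (j - 1)
      in {u ! (k - 1), u ! k} = {p, q}))"

definition triples :: "nat list \<Rightarrow> (nat \<times> nat \<times> nat) set" where
  "triples w = {(x, y, z). x < y \<and> y < z \<and>
     (\<exists>i j k. i < j \<and> j < k \<and> k < length w \<and> w ! i = z \<and> w ! j = y \<and> w ! k = x)}"

definition Gamma :: "nat \<Rightarrow> nat list \<Rightarrow> nat \<times> nat \<times> nat \<Rightarrow> nat" where
  "Gamma n a \<tau> = (case \<tau> of (x, y, z) \<Rightarrow> if P_step n a y x > P_step n a z y then 1 else 0)"

definition t_dist :: "nat \<Rightarrow> nat list \<Rightarrow> nat list \<Rightarrow> nat list \<Rightarrow> nat" where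
  "t_dist n w a b = card {\<tau> \<in> triples w. Gamma n a \<tau> \<noteq> Gamma n b \<tau>}"

definition supp :: "nat \<Rightarrow> nat list \<Rightarrow> nat list \<Rightarrow> (nat \<times> nat \<times> nat) set" where
  "supp n w a = {\<tau> \<in> triples w. Gamma n a \<tau> = 1}"

end

theory Submission
  imports Defs
begin


lemma length_swap_at[simp]: "length (swap_at i u) = length u"
  by (simp add: swap_at_def)

lemma nth_swap_at:
  "1 \<le> i \<Longrightarrow> i < length u \<Longrightarrow> k < length u \<Longrightarrow>
   swap_at i u ! k = (if k = i - 1 then u ! i else if k = i then u ! (i - 1) else u ! k)"
  by (auto simp: swap_at_def nth_list_update)

lemma set_swap_at[simp]: "1 \<le> i \<Longrightarrow> i < length u \<Longrightarrow> set (swap_at i u) = set u"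
  unfolding swap_at_def by (rule set_swap) auto

lemma distinct_swap_at[simp]: "1 \<le> i \<Longrightarrow> i < length u \<Longrightarrow> distinct (swap_at i u) = distinct u"
  unfolding swap_at_def by (rule distinct_swap) auto

lemma swap_at_swap_at: "1 \<le> i \<Longrightarrow> i < length u \<Longrightarrow> swap_at i (swap_at i u) = u"
  by (rule nth_equalityI) (auto simp: nth_swap_at)

lemma swap_at_comm: "1 \<le> i \<Longrightarrow> i < length u \<Longrightarrow> 1 \<le> j \<Longrightarrow> j < length u \<Longrightarrow>
   (i \<ge> j + 2 \<or> j \<ge> i + 2) \<Longrightarrow> swap_at i (swap_at j u) = swap_at j (swap_at i u)"
  by (rule nth_equalityI) (auto simp: nth_swap_at)

lemma swap_at_braid: "1 \<le> i \<Longrightarrow> i + 1 < length u \<Longrightarrow>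
   swap_at i (swap_at (i+1) (swap_at i u)) = swap_at (i+1) (swap_at i (swap_at (i+1) u))"
  by (rule nth_equalityI) (auto simp: nth_swap_at)

lemma act_Nil[simp]: "act [] u = u" by (simp add: act_def)
lemma act_Cons[simp]: "act (k # a) u = act a (swap_at k u)" by (simp add: act_def)
lemma act_append[simp]: "act (a @ b) u = act b (act a u)" by (simp add: act_def)

definition valid :: "nat \<Rightarrow> nat list \<Rightarrow> bool" where
  "valid n a \<longleftrightarrow> set a \<subseteq> {1..n - 1}"

lemma length_act[simp]: "length (act a u) = length u"
  by (induction a arbitrary: u) auto

lemma act_perm: "set a \<subseteq> {1..length u - 1} \<Longrightarrow> set (act a u) = set u \<and> distinct (act a u) = distinct u"
  by (induction a arbitrary: u) auto

lemma id_word_props: "length (id_word n) = n" "set (id_word n) = {1..n}" "distinct (id_word n)"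
  "i < n \<Longrightarrow> id_word n ! i = Suc i"
  by (auto simp: id_word_def simp del: upt_Suc)

lemma is_perm_distinct: "is_perm n w \<Longrightarrow> distinct w"
  unfolding is_perm_def by (metis card_atLeastAtMost card_distinct diff_Suc_1)

lemma act_is_perm: "set a \<subseteq> {1..n - 1} \<Longrightarrow> is_perm n (act a (id_word n))"
  using act_perm[of a "id_word n"] by (auto simp: is_perm_def id_word_props)



fun pl :: "nat list \<Rightarrow> nat list \<Rightarrow> nat set list" where
  "pl [] u = []"
| "pl (k # a) u = {u ! (k - 1), u ! k} # pl a (swap_at k u)"

lemma length_pl[simp]: "length (pl a u) = length a"
  by (induction a arbitrary: u) auto

lemma pl_append[simp]: "pl (a @ b) u = pl a u @ pl b (act a u)"
  by (induction a arbitrary: u) auto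

definition invs :: "nat list \<Rightarrow> nat set set" where
  "invs u = {S. \<exists>i j. i < j \<and> j < length u \<and> u ! j < u ! i \<and> S = {u ! i, u ! j}}"

lemma invs_nth:
  assumes "distinct u" "i < length u" "j < length u" "i \<noteq> j"
  shows "({u ! i, u ! j} \<in> invs u) = ((i < j) \<noteq> (u ! i < u ! j))"
proof
  assume "{u ! i, u ! j} \<in> invs u"
  then obtain i' j' where h: "i' < j'" "j' < length u" "u ! j' < u ! i'" "{u ! i, u ! j} = {u ! i', u ! j'}"
    unfolding invs_def by blast
  from h(4) have "(u!i = u!i' \<and> u!j = u!j') \<or> (u!i = u!j' \<and> u!j = u!i')"
    by (auto simp: doubleton_eq_iff)
  then show "(i < j) \<noteq> (u ! i < u ! j)"
    using assms h nth_eq_iff_index_eq[OF assms(1)] by (metis order.strict_trans not_less_iff_gr_or_eq)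
next
  assume a: "(i < j) \<noteq> (u ! i < u ! j)"
  have ne: "u ! i \<noteq> u ! j" using assms nth_eq_iff_index_eq by blast
  show "{u ! i, u ! j} \<in> invs u"
  proof (cases "i < j")
    case True
    then have "u ! j < u ! i" using a ne by auto
    then show ?thesis unfolding invs_def using True assms by blast
  next
    case False
    then have "j < i" "u ! i < u ! j" using a assms(4) by auto
    then show ?thesis unfolding invs_def using assms by (auto simp: insert_commute)
  qed
qed

lemma invs_elem: "S \<in> invs u \<Longrightarrow> \<exists>i j. i < j \<and> j < length u \<and> u ! j < u ! i \<and> S = {u ! i, u ! j}"
  unfolding invs_def by blast

lemma flip_nth:
  assumes "distinct u" "1 \<le> k" "k < length u" "i < length u" "j < length u" "i \<noteq> j"
  shows "({u ! i, u ! j} \<in> invs (swap_at k u)) = (({u ! i, u ! j} \<in> invs u) \<noteq> ({i, j} = {k - 1, k}))"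
proof -
  define \<sigma> where "\<sigma> t = (if t = k - 1 then k else if t = k then k - 1 else t)" for t
  let ?s = "swap_at k u"
  have s\<sigma>: "?s ! (\<sigma> t) = u ! t" if "t < length u" for t
    using assms that by (auto simp: \<sigma>_def nth_swap_at)
  have \<sigma>l: "\<sigma> t < length u" if "t < length u" for t using assms that by (auto simp: \<sigma>_def)
  have \<sigma>ne: "\<sigma> i \<noteq> \<sigma> j" using assms by (auto simp: \<sigma>_def)
  have ds: "distinct ?s" using assms by simp
  have "({u ! i, u ! j} \<in> invs ?s) = ({?s ! \<sigma> i, ?s ! \<sigma> j} \<in> invs ?s)" using s\<sigma> assms by simp
  also have "\<dots> = ((\<sigma> i < \<sigma> j) \<noteq> (?s ! \<sigma> i < ?s ! \<sigma> j))"
    using invs_nth[OF ds, of "\<sigma> i" "\<sigma> j"] \<sigma>l[OF assms(4)] \<sigma>l[OF assms(5)] \<sigma>ne by simp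
  also have "\<dots> = ((\<sigma> i < \<sigma> j) \<noteq> (u ! i < u ! j))" using s\<sigma> assms by simp
  also have "(\<sigma> i < \<sigma> j) = ((i < j) \<noteq> ({i, j} = {k - 1, k}))"
    using assms by (auto simp: \<sigma>_def doubleton_eq_iff)
  finally show ?thesis using invs_nth[OF assms(1) assms(4,5,6)] by auto
qed

lemma flip:
  assumes "distinct u" "1 \<le> k" "k < length u" "p \<in> set u" "q \<in> set u" "p \<noteq> q"
  shows "({p, q} \<in> invs (swap_at k u)) = (({p, q} \<in> invs u) \<noteq> ({p, q} = {u ! (k - 1), u ! k}))"
proof -
  obtain i j where ij: "i < length u" "j < length u" "u ! i = p" "u ! j = q"
    using assms(4,5) by (metis in_set_conv_nth)
  then have "i \<noteq> j" using assms by auto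
  have "({i, j} = {k - 1, k}) = ({u ! i, u ! j} = {u ! (k - 1), u ! k})"
    using assms ij nth_eq_iff_index_eq[OF assms(1)] \<open>i \<noteq> j\<close>
    by (auto simp: doubleton_eq_iff)
  then show ?thesis using flip_nth[OF assms(1-3) ij(1,2) \<open>i \<noteq> j\<close>] ij by simp
qed

lemma act_invs:
  assumes "distinct u" "set a \<subseteq> {1..length u - 1}" "p \<in> set u" "q \<in> set u" "p \<noteq> q"
  shows "({p, q} \<in> invs (act a u)) = (({p, q} \<in> invs u) \<noteq> odd (count_list (pl a u) {p, q}))"
  using assms
proof (induction a arbitrary: u)
  case Nil
  then show ?case by simp
next
  case (Cons k a)
  let ?s = "swap_at k u"
  have k: "1 \<le> k" "k < length u" using Cons.prems by auto
  have IH: "({p, q} \<in> invs (act a ?s)) = (({p, q} \<in> invs ?s) \<noteq> odd (count_list (pl a ?s) {p, q}))"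
    using Cons.prems k by (intro Cons.IH) auto
  show ?case using IH flip[OF Cons.prems(1) k Cons.prems(3-5)] by auto
qed

lemma pl_elem:
  assumes "distinct u" "set a \<subseteq> {1..length u - 1}" "S \<in> set (pl a u)"
  shows "\<exists>p q. p \<in> set u \<and> q \<in> set u \<and> p \<noteq> q \<and> S = {p, q}"
  using assms
proof (induction a arbitrary: u)
  case Nil then show ?case by simp
next
  case (Cons k a)
  have k: "1 \<le> k" "k < length u" using Cons.prems by auto
  show ?case
  proof (cases "S = {u ! (k - 1), u ! k}")
    case True
    then show ?thesis using k Cons.prems(1) nth_eq_iff_index_eq[OF Cons.prems(1)]
      by (intro exI[of _ "u ! (k - 1)"] exI[of _ "u ! k"]) auto
  next
    case False
    then have "S \<in> set (pl a (swap_at k u))" using Cons.prems by simp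
    then show ?thesis using Cons.IH[of "swap_at k u"] Cons.prems k by auto
  qed
qed

lemma invs_elem2: "S \<in> invs u \<Longrightarrow> \<exists>p q. p \<in> set u \<and> q \<in> set u \<and> p < q \<and> S = {p, q}"
proof -
  assume "S \<in> invs u"
  then obtain i j where h: "i < j" "j < length u" "u ! j < u ! i" "S = {u ! i, u ! j}"
    unfolding invs_def by blast
  then have "u ! j \<in> set u" "u ! i \<in> set u" by auto
  with h show ?thesis by (intro exI[of _ "u ! j"] exI[of _ "u ! i"]) (auto simp: insert_commute)
qed

lemma invs_id[simp]: "invs (id_word n) = {}"
  unfolding invs_def using id_word_props by auto

lemma invs_act_id:
  assumes "set a \<subseteq> {1..n - 1}"
  shows "invs (act a (id_word n)) = {S \<in> set (pl a (id_word n)). odd (count_list (pl a (id_word n)) S)}"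
proof -
  have d: "distinct (id_word n)" and l: "length (id_word n) = n" using id_word_props by auto
  have st: "set (act a (id_word n)) = set (id_word n)" using act_perm[of a "id_word n"] assms l by auto
  show ?thesis
  proof (intro set_eqI iffI)
    fix S assume S: "S \<in> invs (act a (id_word n))"
    then obtain p q where pq: "p \<in> set (id_word n)" "q \<in> set (id_word n)" "p < q" "S = {p, q}"
      using invs_elem2 st by blast
    have pq': "p \<noteq> q" using pq by simp
    have o: "odd (count_list (pl a (id_word n)) S)"
      using act_invs[OF d _ pq(1,2) pq'] assms l S pq(4) by auto
    then have "count_list (pl a (id_word n)) S \<noteq> 0" by (metis even_zero)
    then have "S \<in> set (pl a (id_word n))" by (simp add: count_list_0_iff)
    with o show "S \<in> {S \<in> set (pl a (id_word n)). odd (count_list (pl a (id_word n)) S)}"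
      by simp
  next
    fix S assume S: "S \<in> {S \<in> set (pl a (id_word n)). odd (count_list (pl a (id_word n)) S)}"
    then obtain p q where pq: "p \<in> set (id_word n)" "q \<in> set (id_word n)" "p \<noteq> q" "S = {p, q}"
      using pl_elem[OF d, of a S] assms l by auto
    then show "S \<in> invs (act a (id_word n))"
      using act_invs[OF d _ pq(1,2,3)] assms l S by auto
  qed
qed

lemma card_invs:
  assumes "distinct u" shows "card (invs u) = ninv u"
proof -
  let ?A = "{(i, j). i < j \<and> j < length u \<and> u ! i > u ! j}"
  have "bij_betw (\<lambda>(i, j). {u ! i, u ! j}) ?A (invs u)"
  proof (rule bij_betwI')
    fix x y assume "x \<in> ?A" "y \<in> ?A"
    then obtain i j i' j' where x: "x = (i, j)" "i < j" "j < length u" "u ! i > u ! j"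
      and y: "y = (i', j')" "i' < j'" "j' < length u" "u ! i' > u ! j'" by blast
    show "((\<lambda>(i, j). {u ! i, u ! j}) x = (\<lambda>(i, j). {u ! i, u ! j}) y) = (x = y)"
    proof
      assume "(\<lambda>(i, j). {u ! i, u ! j}) x = (\<lambda>(i, j). {u ! i, u ! j}) y"
      then have "{u ! i, u ! j} = {u ! i', u ! j'}" using x y by simp
      then have "u ! i = u ! i' \<and> u ! j = u ! j'" using x y by (auto simp: doubleton_eq_iff)
      then show "x = y" using x y nth_eq_iff_index_eq[OF assms] by auto
    qed simp
  next
    fix x assume "x \<in> ?A" then show "(\<lambda>(i, j). {u ! i, u ! j}) x \<in> invs u"
      unfolding invs_def by auto
  next
    fix S assume "S \<in> invs u" then show "\<exists>x \<in> ?A. S = (\<lambda>(i, j). {u ! i, u ! j}) x"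
      unfolding invs_def by auto
  qed
  then show ?thesis unfolding ninv_def by (simp add: bij_betw_same_card)
qed

lemma count_list_distinct: "distinct xs \<Longrightarrow> x \<in> set xs \<Longrightarrow> count_list xs x = 1"
  by (induction xs) (auto simp: count_list_0_iff)

lemma distinct_pl_invs:
  assumes "set a \<subseteq> {1..n - 1}" "distinct (pl a (id_word n))"
  shows "invs (act a (id_word n)) = set (pl a (id_word n))"
  using invs_act_id[OF assms(1)] count_list_distinct[OF assms(2)] by auto

lemma reduced_pl:
  assumes "a \<in> reduced_words n w"
  shows "distinct (pl a (id_word n)) \<and> set (pl a (id_word n)) = invs w \<and> w = act a (id_word n)
    \<and> is_perm n w"
proof -
  let ?L = "pl a (id_word n)"
  have v: "set a \<subseteq> {1..n - 1}" and len: "length a = ninv w" and w: "act a (id_word n) = w"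
    using assms unfolding reduced_words_def by auto
  have p: "is_perm n w" using act_is_perm[OF v] w by simp
  have I: "invs w = {S \<in> set ?L. odd (count_list ?L S)}" using invs_act_id[OF v] w by simp
  have "card (invs w) = length ?L" using card_invs[OF is_perm_distinct[OF p]] len by simp
  moreover have c1: "card (invs w) \<le> card (set ?L)" unfolding I by (intro card_mono) auto
  moreover have "card (set ?L) \<le> length ?L" by (rule card_length)
  ultimately have eq: "card (set ?L) = length ?L" by simp
  then have dL: "distinct ?L" by (simp add: card_distinct)
  have "invs w = set ?L" using distinct_pl_invs[OF v dL] w by simp
  then show ?thesis using dL w p by simp
qed



lemma finite_invs[simp]: "finite (invs u)"
proof -
  have "invs u \<subseteq> (\<lambda>(i, j). {u ! i, u ! j}) ` ({..<length u} \<times> {..<length u})"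
    unfolding invs_def by auto
  then show ?thesis by (rule finite_subset) auto
qed

lemma finite_Des[simp]: "finite (Des u)"
  unfolding Des_def by (rule finite_subset[of _ "{..<length u}"]) auto

lemma reduced_valid: "a \<in> reduced_words n w \<Longrightarrow> set a \<subseteq> {1..n - 1}"
  unfolding reduced_words_def by auto

lemma reduced_prefix1:
  assumes "b @ [j] \<in> reduced_words n w"
  shows "j \<in> Des w \<and> b \<in> reduced_words n (swap_at j w) \<and> act b (id_word n) = swap_at j w"
proof -
  let ?v = "act b (id_word n)"
  have R: "distinct (pl (b @ [j]) (id_word n)) \<and> set (pl (b @ [j]) (id_word n)) = invs w
    \<and> w = act (b @ [j]) (id_word n) \<and> is_perm n w" using reduced_pl[OF assms] .
  have vb: "set b \<subseteq> {1..n - 1}" and j: "1 \<le> j" "j \<le> n - 1" using reduced_valid[OF assms] by auto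
  have lv: "length ?v = n" using id_word_props by simp
  have pv: "is_perm n ?v" using act_is_perm[OF vb] .
  have dv: "distinct ?v" using is_perm_distinct[OF pv] .
  have jl: "j < length ?v" using j lv by auto
  have w: "w = swap_at j ?v" using R by simp
  have dLb: "distinct (pl b (id_word n))" and S0: "{?v ! (j - 1), ?v ! j} \<notin> set (pl b (id_word n))"
    using R by auto
  have Iv: "invs ?v = set (pl b (id_word n))" using distinct_pl_invs[OF vb dLb] .
  have "\<not> ((j - 1 < j) \<noteq> (?v ! (j - 1) < ?v ! j))"
    using invs_nth[OF dv, of "j - 1" j] S0 Iv j jl by auto
  then have lt: "?v ! (j - 1) < ?v ! j" using j by auto
  have "w ! (j - 1) = ?v ! j" "w ! j = ?v ! (j - 1)" using w j jl by (auto simp: nth_swap_at)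
  then have "j \<in> Des w" using lt j jl w unfolding Des_def by auto
  moreover have "?v = swap_at j w" using w swap_at_swap_at[of j ?v] j jl by simp
  moreover have "length b = ninv ?v"
    using card_invs[OF dv] Iv distinct_card[OF dLb] by simp
  ultimately show ?thesis using vb unfolding reduced_words_def by auto
qed

lemma reduced_prefix:
  "a @ c \<in> reduced_words n w \<Longrightarrow> a \<in> reduced_words n (act a (id_word n))"
proof (induction c arbitrary: w rule: rev_induct)
  case Nil then show ?case unfolding reduced_words_def by auto
next
  case (snoc x c)
  then have "(a @ c) @ [x] \<in> reduced_words n w" by simp
  from reduced_prefix1[OF this] have "a @ c \<in> reduced_words n (swap_at x w)" by blast
  then show ?case using snoc.IH by blast
qed

lemma reduced_act: "a \<in> reduced_words n w \<Longrightarrow> act a (id_word n) = w"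
  unfolding reduced_words_def by auto

lemma Des_inv:
  assumes "is_perm n w" "m \<in> Des w"
  shows "invs (swap_at m w) = invs w - {{w ! (m - 1), w ! m}}"
    "{w ! (m - 1), w ! m} \<in> invs w"
proof -
  have d: "distinct w" using is_perm_distinct[OF assms(1)] .
  have m: "1 \<le> m" "m < length w" "w ! (m - 1) > w ! m" using assms(2) unfolding Des_def by auto
  show S0: "{w ! (m - 1), w ! m} \<in> invs w" using invs_nth[OF d, of "m - 1" m] m by auto
  show "invs (swap_at m w) = invs w - {{w ! (m - 1), w ! m}}"
  proof (intro set_eqI iffI)
    fix S assume S: "S \<in> invs (swap_at m w)"
    then obtain p q where pq: "p \<in> set w" "q \<in> set w" "p < q" "S = {p, q}"
      using invs_elem2[OF S] m by auto
    show "S \<in> invs w - {{w ! (m - 1), w ! m}}"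
      using flip[OF d m(1,2) pq(1,2)] pq S S0 by auto
  next
    fix S assume S: "S \<in> invs w - {{w ! (m - 1), w ! m}}"
    then obtain p q where pq: "p \<in> set w" "q \<in> set w" "p < q" "S = {p, q}"
      using invs_elem2 by blast
    show "S \<in> invs (swap_at m w)"
      using flip[OF d m(1,2) pq(1,2)] pq S by auto
  qed
qed

lemma Des_ninv:
  assumes "is_perm n w" "m \<in> Des w"
  shows "ninv (swap_at m w) = ninv w - 1" "ninv w > 0" "is_perm n (swap_at m w)"
proof -
  have d: "distinct w" using is_perm_distinct[OF assms(1)] .
  have m: "1 \<le> m" "m < length w" using assms(2) unfolding Des_def by auto
  have p: "is_perm n (swap_at m w)" using assms(1) m unfolding is_perm_def by simp
  then show "is_perm n (swap_at m w)" .
  have "ninv (swap_at m w) = card (invs w - {{w ! (m - 1), w ! m}})"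
    using card_invs[OF is_perm_distinct[OF p]] Des_inv[OF assms] by simp
  also have "\<dots> = ninv w - 1" using Des_inv(2)[OF assms] card_invs[OF d] by simp
  finally show "ninv (swap_at m w) = ninv w - 1" .
  show "ninv w > 0" using Des_inv(2)[OF assms] card_invs[OF d] card_gt_0_iff by fastforce
qed

lemma noDes_sorted:
  assumes "distinct w" "Des w = {}"
  shows "i < j \<Longrightarrow> j < length w \<Longrightarrow> w ! i < w ! j"
proof (induction j)
  case 0 then show ?case by simp
next
  case (Suc j)
  have "Suc j \<notin> Des w" using assms by simp
  then have "\<not> w ! j > w ! Suc j" using Suc.prems unfolding Des_def by auto
  moreover have "w ! j \<noteq> w ! Suc j" using assms(1) Suc.prems nth_eq_iff_index_eq by fastforce
  ultimately have "w ! j < w ! Suc j" by simp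
  then show ?case using Suc by (cases "i = j") auto
qed

lemma ninv_pos_Des:
  assumes "distinct w" "ninv w > 0" shows "Des w \<noteq> {}"
proof
  assume D: "Des w = {}"
  have e: "{(i, j). i < j \<and> j < length w \<and> w ! i > w ! j} = {}"
    using noDes_sorted[OF assms(1) D] by (auto dest: less_asym)
  show False using assms(2) unfolding ninv_def e by simp
qed

lemma ninv0_id:
  assumes "is_perm n w" "ninv w = 0" shows "w = id_word n"
proof -
  have d: "distinct w" using is_perm_distinct[OF assms(1)] .
  have "Des w = {}"
  proof (rule ccontr)
    assume "Des w \<noteq> {}" then obtain m where "m \<in> Des w" by blast
    then show False using Des_ninv(2)[OF assms(1)] assms(2) by simp
  qed
  then have "sorted w" using noDes_sorted[OF d] unfolding sorted_iff_nth_mono_less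
    by (meson less_imp_le)
  moreover have "sorted (id_word n)" by (simp add: id_word_def del: upt_Suc)
  ultimately show ?thesis
    using sorted_distinct_set_unique[of w "id_word n"] d id_word_props assms(1)
    unfolding is_perm_def by simp
qed

lemma greedy_red:
  assumes sel: "\<And>D. finite D \<Longrightarrow> D \<noteq> {} \<Longrightarrow> sel D \<in> D"
  shows "is_perm n w \<Longrightarrow> ninv w = k \<Longrightarrow> greedy_aux sel k w \<in> reduced_words n w"
proof (induction k arbitrary: w)
  case 0
  then show ?case using ninv0_id[OF 0(1)] unfolding reduced_words_def by simp
next
  case (Suc k)
  have d: "distinct w" using is_perm_distinct[OF Suc.prems(1)] .
  let ?m = "sel (Des w)"
  have m: "?m \<in> Des w" using sel ninv_pos_Des[OF d] Suc.prems by simp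
  have pv: "is_perm n (swap_at ?m w)" and nv: "ninv (swap_at ?m w) = k"
    using Des_ninv[OF Suc.prems(1) m] Suc.prems by auto
  have IH: "greedy_aux sel k (swap_at ?m w) \<in> reduced_words n (swap_at ?m w)" using Suc.IH[OF pv nv] .
  have ml: "1 \<le> ?m" "?m < length w" using m unfolding Des_def by auto
  have ln: "length w = n" using Suc.prems unfolding is_perm_def by simp
  show ?case using IH ml ln Suc.prems swap_at_swap_at[of ?m w] nv
    unfolding reduced_words_def by (auto simp: Let_def)
qed

lemma Min_sel: "finite D \<Longrightarrow> D \<noteq> {} \<Longrightarrow> Min D \<in> D" by simp
lemma Max_sel: "finite D \<Longrightarrow> D \<noteq> {} \<Longrightarrow> Max D \<in> D" by simp

lemma amin_red: "is_perm n w \<Longrightarrow> a_min w \<in> reduced_words n w"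
  unfolding a_min_def using greedy_red[OF Min_sel] by blast
lemma amax_red: "is_perm n w \<Longrightarrow> a_max w \<in> reduced_words n w"
  unfolding a_max_def using greedy_red[OF Max_sel] by blast

lemma greedy_step:
  assumes "is_perm n w" "ninv w > 0" "sel (Des w) \<in> Des w"
  shows "greedy_aux sel (ninv w) w = greedy_aux sel (ninv (swap_at (sel (Des w)) w)) (swap_at (sel (Des w)) w) @ [sel (Des w)]"
proof -
  obtain k where k: "ninv w = Suc k" using assms(2) by (cases "ninv w") auto
  have "ninv (swap_at (sel (Des w)) w) = k" using Des_ninv(1)[OF assms(1,3)] k by simp
  then show ?thesis using k by (simp add: Let_def)
qed

lemma amin_step:
  assumes "is_perm n w" "ninv w > 0"
  shows "a_min w = a_min (swap_at (Min (Des w)) w) @ [Min (Des w)]" "Min (Des w) \<in> Des w"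
proof -
  show m: "Min (Des w) \<in> Des w" using ninv_pos_Des[OF is_perm_distinct[OF assms(1)] assms(2)] by simp
  show "a_min w = a_min (swap_at (Min (Des w)) w) @ [Min (Des w)]"
    unfolding a_min_def using greedy_step[of n w Min, OF assms m] .
qed

lemma amax_step:
  assumes "is_perm n w" "ninv w > 0"
  shows "a_max w = a_max (swap_at (Max (Des w)) w) @ [Max (Des w)]" "Max (Des w) \<in> Des w"
proof -
  show m: "Max (Des w) \<in> Des w" using ninv_pos_Des[OF is_perm_distinct[OF assms(1)] assms(2)] by simp
  show "a_max w = a_max (swap_at (Max (Des w)) w) @ [Max (Des w)]"
    unfolding a_max_def using greedy_step[of n w Max, OF assms m] .
qed



lemma pl_nth: "j < length a \<Longrightarrow>
  pl a u ! j = {act (take j a) u ! (a ! j - 1), act (take j a) u ! (a ! j)}"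
proof (induction a arbitrary: u j)
  case Nil then show ?case by simp
next
  case (Cons k a)
  then show ?case by (cases j) auto
qed

lemma P_step_idx:
  assumes "distinct (pl a (id_word n))" "i < length a" "pl a (id_word n) ! i = {p, q}"
  shows "P_step n a p q = Suc i"
  unfolding P_step_def
proof (rule Least_equality)
  show "1 \<le> Suc i \<and> Suc i \<le> length a \<and> (let u = act (take (Suc i - 1) a) (id_word n); k = a ! (Suc i - 1)
      in {u ! (k - 1), u ! k} = {p, q})"
    using assms pl_nth[OF assms(2)] by (simp add: Let_def)
next
  fix j assume j: "1 \<le> j \<and> j \<le> length a \<and> (let u = act (take (j - 1) a) (id_word n); k = a ! (j - 1)
      in {u ! (k - 1), u ! k} = {p, q})"
  then have "j - 1 < length a" by auto
  then have "pl a (id_word n) ! (j - 1) = {p, q}" using j pl_nth[of "j - 1" a "id_word n"] by (simp add: Let_def)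
  then have "j - 1 = i" using assms j \<open>j - 1 < length a\<close> nth_eq_iff_index_eq[OF assms(1), of "j - 1" i] by simp
  moreover have "1 \<le> j" using j by blast
  ultimately show "Suc i \<le> j" by linarith
qed

lemma Gamma_idx:
  assumes "distinct (pl a (id_word n))" "i < length a" "j < length a"
    "pl a (id_word n) ! i = {y, x}" "pl a (id_word n) ! j = {z, y}"
  shows "Gamma n a (x, y, z) = (if j < i then 1 else 0)"
  using P_step_idx[OF assms(1,2,4)] P_step_idx[OF assms(1,3,5)] unfolding Gamma_def by simp

lemma Gamma_01: "Gamma n a \<tau> = 0 \<or> Gamma n a \<tau> = 1"
  unfolding Gamma_def by (auto split: prod.splits)

lemma invs_ord:
  assumes "distinct w" "{p, q} \<in> invs w" "p < q"
  shows "\<exists>i j. i < j \<and> j < length w \<and> w ! i = q \<and> w ! j = p"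
proof -
  obtain i j where h: "i < j" "j < length w" "w ! j < w ! i" "{p, q} = {w ! i, w ! j}"
    using invs_elem[OF assms(2)] by metis
  then have "w ! i = q \<and> w ! j = p" using assms(3) by (auto simp: doubleton_eq_iff)
  then show ?thesis using h by blast
qed

lemma triples_char:
  assumes "distinct w"
  shows "((x, y, z) \<in> triples w) = (x < y \<and> y < z \<and> {x, y} \<in> invs w \<and> {y, z} \<in> invs w)"
proof
  assume "(x, y, z) \<in> triples w"
  then obtain i j k where h: "x < y" "y < z" "i < j" "j < k" "k < length w" "w ! i = z" "w ! j = y" "w ! k = x"
    unfolding triples_def by blast
  have "{w ! j, w ! k} \<in> invs w" unfolding invs_def using h by auto
  moreover have "{w ! i, w ! j} \<in> invs w" unfolding invs_def using h by (auto intro: order.strict_trans)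
  ultimately show "x < y \<and> y < z \<and> {x, y} \<in> invs w \<and> {y, z} \<in> invs w" using h by (auto simp: insert_commute)
next
  assume h: "x < y \<and> y < z \<and> {x, y} \<in> invs w \<and> {y, z} \<in> invs w"
  obtain j k where jk: "j < k" "k < length w" "w ! j = y" "w ! k = x" using invs_ord[OF assms, of x y] h by blast
  obtain i j' where ij: "i < j'" "j' < length w" "w ! i = z" "w ! j' = y" using invs_ord[OF assms, of y z] h by blast
  have "j' = j" using jk ij nth_eq_iff_index_eq[OF assms] by auto
  then show "(x, y, z) \<in> triples w" unfolding triples_def using h jk ij by blast
qed

lemma finite_triples[simp]: "finite (triples w)"
proof -
  have "triples w \<subseteq> set w \<times> set w \<times> set w"
    unfolding triples_def by auto
  then show ?thesis by (rule finite_subset) auto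
qed

lemma block_idx:
  assumes d1: "distinct (X @ M @ Y)" and d2: "distinct (X @ M' @ Y)" and sM: "set M = set M'"
    and lM: "length M = length M'"
    and I: "(X @ M @ Y) ! I = S" "I < length (X @ M @ Y)"
    and I': "(X @ M' @ Y) ! I' = S" "I' < length (X @ M' @ Y)"
  shows "(S \<notin> set M \<longrightarrow> I' = I \<and> (I < length X \<or> I \<ge> length X + length M)) \<and> (S \<in> set M \<longrightarrow> length X \<le> I \<and> I < length X + length M
     \<and> length X \<le> I' \<and> I' < length X + length M)"
proof -
  have inb: "length X \<le> K \<and> K < length X + length M" if "(X @ M @ Y) ! K = S" "K < length (X @ M @ Y)" "S \<in> set M" for K
  proof (rule ccontr)
    assume "\<not> ?thesis"
    then have "K < length X \<or> K \<ge> length X + length M" by auto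
    then have "S \<in> set X \<or> S \<in> set Y" using that
      by (auto simp: nth_append split: if_splits)
    then show False using d1 that by auto
  qed
  have inb': "length X \<le> K \<and> K < length X + length M" if "(X @ M' @ Y) ! K = S" "K < length (X @ M' @ Y)" "S \<in> set M" for K
  proof (rule ccontr)
    assume "\<not> ?thesis"
    then have "K < length X \<or> K \<ge> length X + length M'" using lM by auto
    then have "S \<in> set X \<or> S \<in> set Y" using that
      by (auto simp: nth_append split: if_splits)
    then show False using d2 that sM by auto
  qed
  have A: "S \<notin> set M \<longrightarrow> I' = I \<and> (I < length X \<or> I \<ge> length X + length M)"
  proof
    assume S: "S \<notin> set M"
    have o: "I < length X \<or> I \<ge> length X + length M"
    proof (rule ccontr)
      assume "\<not> ?thesis"
      then have "S \<in> set M" using I by (auto simp: nth_append)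
      then show False using S by simp
    qed
    then have "(X @ M' @ Y) ! I = S" using I lM by (auto simp: nth_append)
    then show "I' = I \<and> (I < length X \<or> I \<ge> length X + length M)" using I I' lM nth_eq_iff_index_eq[OF d2, of I I'] o by simp
  qed
  show ?thesis using A inb[OF I] inb'[OF I'] by blast
qed

lemma block_order:
  assumes d1: "distinct (X @ M @ Y)" and d2: "distinct (X @ M' @ Y)" and sM: "set M = set M'"
    and lM: "length M = length M'"
    and I: "(X @ M @ Y) ! I = S1" "I < length (X @ M @ Y)"
    and I': "(X @ M' @ Y) ! I' = S1" "I' < length (X @ M' @ Y)"
    and J: "(X @ M @ Y) ! J = S2" "J < length (X @ M @ Y)"
    and J': "(X @ M' @ Y) ! J' = S2" "J' < length (X @ M' @ Y)"
    and nb: "\<not> (S1 \<in> set M \<and> S2 \<in> set M)"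
  shows "(J < I) = (J' < I')"
  using block_idx[OF d1 d2 sM lM I I'] block_idx[OF d1 d2 sM lM J J'] nb by auto

lemma Gamma_block:
  assumes a: "a \<in> reduced_words n w" and b: "b \<in> reduced_words n w"
    and La: "pl a (id_word n) = X @ M @ Y" and Lb: "pl b (id_word n) = X @ M' @ Y"
    and sM: "set M = set M'" and lM: "length M = length M'"
    and t: "(x, y, z) \<in> triples w"
    and nb: "\<not> ({x, y} \<in> set M \<and> {y, z} \<in> set M)"
  shows "Gamma n a (x, y, z) = Gamma n b (x, y, z)"
proof -
  note Ra = reduced_pl[OF a] and Rb = reduced_pl[OF b]
  have dw: "distinct w" using is_perm_distinct Ra by blast
  have xy: "{x, y} \<in> invs w" and yz: "{y, z} \<in> invs w" using t triples_char[OF dw] by auto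
  obtain I where I: "I < length (X @ M @ Y)" "(X @ M @ Y) ! I = {y, x}"
    using xy Ra La by (metis in_set_conv_nth insert_commute)
  obtain J where J: "J < length (X @ M @ Y)" "(X @ M @ Y) ! J = {z, y}"
    using yz Ra La by (metis in_set_conv_nth insert_commute)
  obtain I' where I': "I' < length (X @ M' @ Y)" "(X @ M' @ Y) ! I' = {y, x}"
    using xy Rb Lb by (metis in_set_conv_nth insert_commute)
  obtain J' where J': "J' < length (X @ M' @ Y)" "(X @ M' @ Y) ! J' = {z, y}"
    using yz Rb Lb by (metis in_set_conv_nth insert_commute)
  have nb': "\<not> ({y, x} \<in> set M \<and> {z, y} \<in> set M)" using nb by (simp add: insert_commute)
  have o: "(J < I) = (J' < I')"
    using block_order[OF _ _ sM lM I(2,1) I'(2,1) J(2,1) J'(2,1) nb'] Ra Rb La Lb by simp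
  have "Gamma n a (x, y, z) = (if J < I then 1 else 0)"
    using Gamma_idx[of a n I J y x z] Ra La I J by (metis length_pl)
  moreover have "Gamma n b (x, y, z) = (if J' < I' then 1 else 0)"
    using Gamma_idx[of b n I' J' y x z] Rb Lb I' J' by (metis length_pl)
  ultimately show ?thesis using o by simp
qed



lemma sw1[simp]: "1 \<le> i \<Longrightarrow> i < length u \<Longrightarrow> swap_at i u ! (i - 1) = u ! i"
  by (simp add: nth_swap_at)
lemma sw2[simp]: "1 \<le> i \<Longrightarrow> i < length u \<Longrightarrow> swap_at i u ! i = u ! (i - 1)"
  by (simp add: nth_swap_at)
lemma sw1'[simp]: "Suc 0 \<le> i \<Longrightarrow> i < length u \<Longrightarrow> swap_at i u ! (i - Suc 0) = u ! i"
  by (simp add: nth_swap_at)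
lemma sw2'[simp]: "Suc 0 \<le> i \<Longrightarrow> i < length u \<Longrightarrow> swap_at i u ! i = u ! (i - Suc 0)"
  by (simp add: nth_swap_at)
lemma sw3'[simp]: "k \<noteq> i - Suc 0 \<Longrightarrow> k \<noteq> i \<Longrightarrow> swap_at i u ! k = u ! k"
  by (simp add: swap_at_def)
lemma sw4[simp]: "Suc i < length u \<Longrightarrow> swap_at (Suc i) u ! i = u ! Suc i"
  by (simp add: nth_swap_at)
lemma sw5[simp]: "Suc i < length u \<Longrightarrow> swap_at (Suc i) u ! Suc i = u ! i"
  by (simp add: nth_swap_at)
lemma sw3[simp]: "k \<noteq> i - 1 \<Longrightarrow> k \<noteq> i \<Longrightarrow> swap_at i u ! k = u ! k"
  by (simp add: swap_at_def)

lemma comm_step_props: "comm_step a b \<Longrightarrow> length a = length b \<and> set a = set b"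
  by (induction rule: comm_step.induct) auto

lemma comm_step_act: "comm_step a b \<Longrightarrow> set a \<subseteq> {1..length u - 1} \<Longrightarrow> act a u = act b u"
proof (induction rule: comm_step.induct)
  case (1 i j xs ys)
  then show ?case using swap_at_comm[of i "act xs u" j] by auto
qed

lemma comm_step_red: "comm_step a b \<Longrightarrow> a \<in> reduced_words n w \<Longrightarrow> b \<in> reduced_words n w"
  using comm_step_props comm_step_act[of a b "id_word n"] unfolding reduced_words_def
  by (auto simp: id_word_props)

lemma comm_step_sym: "comm_step a b \<Longrightarrow> comm_step b a"
proof (induction rule: comm_step.induct)
  case (1 i j xs ys)
  have "comm_step (xs @ [j, i] @ ys) (xs @ [i, j] @ ys)" by (rule comm_step.intros) (use 1 in auto)
  then show ?case by simp
qed

lemma braid_step_props: "braid_step a b \<Longrightarrow> length a = length b \<and> set a = set b"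
  by (induction rule: braid_step.induct) auto

lemma act_braid: "1 \<le> i \<Longrightarrow> i + 1 < length u \<Longrightarrow> act [i, i+1, i] u = act [i+1, i, i+1] u"
  using swap_at_braid[of i u] by simp

lemma braid_red:
  assumes "a = xs @ [i, i + 1, i] @ ys" "b = xs @ [i + 1, i, i + 1] @ ys"
  shows "(a \<in> reduced_words n w) = (b \<in> reduced_words n w)"
proof -
  have "set a = set b" "length a = length b" using assms by auto
  moreover have "act a (id_word n) = act b (id_word n)" if "set a \<subseteq> {1..n - 1}"
  proof -
    have "1 \<le> i" "i + 1 < length (act xs (id_word n))" using that assms by (auto simp: id_word_props)
    then show ?thesis using act_braid[of i "act xs (id_word n)"] assms by simp
  qed
  ultimately show ?thesis unfolding reduced_words_def by auto
qed

lemma braid_step_red: "braid_step a b \<Longrightarrow> (a \<in> reduced_words n w) = (b \<in> reduced_words n w)"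
  by (induction rule: braid_step.induct) (use braid_red in blast)+



lemma comm_Gamma:
  assumes "comm_step a b" "a \<in> reduced_words n w" "\<tau> \<in> triples w"
  shows "Gamma n a \<tau> = Gamma n b \<tau>"
  using assms
proof (induction rule: comm_step.induct)
  case (1 i j xs ys)
  let ?a = "xs @ [i, j] @ ys" and ?b = "xs @ [j, i] @ ys"
  have b: "?b \<in> reduced_words n w" using comm_step_red[OF comm_step.intros[OF 1(1)] 1(2)] .
  have v: "set ?a \<subseteq> {1..n - 1}" using reduced_valid[OF 1(2)] .
  let ?u = "act xs (id_word n)"
  have lu: "length ?u = n" by (simp add: id_word_props)
  have pu: "is_perm n ?u" using act_is_perm[of xs n] v by auto
  have du: "distinct ?u" using is_perm_distinct[OF pu] .
  have ij: "1 \<le> i" "i < n" "1 \<le> j" "j < n" using v by auto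
  have c: "swap_at j (swap_at i ?u) = swap_at i (swap_at j ?u)"
    using swap_at_comm[of i ?u j] ij lu 1(1) by auto
  let ?A = "{?u ! (i - 1), ?u ! i}" and ?B = "{?u ! (j - 1), ?u ! j}"
  have s1: "swap_at i ?u ! (j - 1) = ?u ! (j - 1)" "swap_at i ?u ! j = ?u ! j"
    by (rule sw3; use 1(1) ij in arith)+
  have s2: "swap_at j ?u ! (i - 1) = ?u ! (i - 1)" "swap_at j ?u ! i = ?u ! i"
    by (rule sw3; use 1(1) ij in arith)+
  have La: "pl ?a (id_word n) = pl xs (id_word n) @ [?A, ?B] @ pl ys (swap_at j (swap_at i ?u))"
    by (simp only: pl_append pl.simps s1 act_append act_Cons act_Nil append.simps)
  have Lb: "pl ?b (id_word n) = pl xs (id_word n) @ [?B, ?A] @ pl ys (swap_at j (swap_at i ?u))"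
    by (simp only: pl_append pl.simps s2 act_append act_Cons act_Nil append.simps c)
  obtain x y z where t: "\<tau> = (x, y, z)" by (cases \<tau>) auto
  have dw: "distinct w" using reduced_pl[OF 1(2)] is_perm_distinct by blast
  have xyz: "x < y" "y < z" using 1(3) t triples_char[OF dw] by simp_all
  have ne: "?u ! p \<noteq> ?u ! q" if "p < n" "q < n" "p \<noteq> q" for p q
    using nth_eq_iff_index_eq[OF du, of p q] lu that by simp
  have d1: "i - 1 \<noteq> j - 1" "i - 1 \<noteq> j" "i \<noteq> j - 1" "i \<noteq> j" using 1(1) ij by arith+
  have disj: False if "y \<in> ?A" "y \<in> ?B"
  proof -
    have ya: "y = ?u ! (i - 1) \<or> y = ?u ! i" using that(1) by simp
    have yb: "y = ?u ! (j - 1) \<or> y = ?u ! j" using that(2) by simp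
    have l: "i - 1 < n" "i < n" "j - 1 < n" "j < n" using ij by arith+
    show False using ya yb ne[OF l(1) l(3) d1(1)] ne[OF l(1) l(4) d1(2)] ne[OF l(2) l(3) d1(3)]
      ne[OF l(2) l(4) d1(4)] by metis
  qed
  have nb: "\<not> ({x, y} \<in> set [?A, ?B] \<and> {y, z} \<in> set [?A, ?B])"
  proof
    assume h: "{x, y} \<in> set [?A, ?B] \<and> {y, z} \<in> set [?A, ?B]"
    have "{x, y} \<noteq> {y, z}" using xyz by (auto simp: doubleton_eq_iff)
    moreover have "({x, y} = ?A \<or> {x, y} = ?B) \<and> ({y, z} = ?A \<or> {y, z} = ?B)" using h by simp
    ultimately have "y \<in> ?A \<and> y \<in> ?B" by (metis insertI1 insertI2)
    then show False using disj by blast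
  qed
  have sM: "set [?A, ?B] = set [?B, ?A]" by auto
  have tt: "(x, y, z) \<in> triples w" using 1(3) t by simp
  show ?case unfolding t by (rule Gamma_block[OF 1(2) b La Lb sM _ tt nb]) simp
qed

lemma comm_star_red: "comm_step\<^sup>*\<^sup>* a b \<Longrightarrow> a \<in> reduced_words n w \<Longrightarrow> b \<in> reduced_words n w"
  by (induction rule: rtranclp_induct) (auto intro: comm_step_red)

lemma comm_star_Gamma: "comm_step\<^sup>*\<^sup>* a b \<Longrightarrow> a \<in> reduced_words n w \<Longrightarrow> \<tau> \<in> triples w
  \<Longrightarrow> Gamma n a \<tau> = Gamma n b \<tau>"
proof (induction rule: rtranclp_induct)
  case base then show ?case by simp
next
  case (step b c)
  then show ?case using comm_Gamma[of b c n w \<tau>] comm_star_red[OF step(1,4)] by simp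
qed

lemma three: "(x::nat) < y \<Longrightarrow> y < z \<Longrightarrow> p < q \<Longrightarrow> q < r \<Longrightarrow> {x, y} \<in> {{p, q}, {p, r}, {q, r}}
  \<Longrightarrow> {y, z} \<in> {{p, q}, {p, r}, {q, r}} \<Longrightarrow> x = p \<and> y = q \<and> z = r"
  by (simp add: doubleton_eq_iff) linarith

lemma braid_Gamma:
  assumes a: "xs @ [i, i + 1, i] @ ys \<in> reduced_words n w"
  defines "u \<equiv> act xs (id_word n)"
  defines "p \<equiv> u ! (i - 1)" and "q \<equiv> u ! i" and "r \<equiv> u ! (i + 1)"
  shows "(p, q, r) \<in> triples w \<and> Gamma n (xs @ [i, i + 1, i] @ ys) (p, q, r) = 0
    \<and> Gamma n (xs @ [i + 1, i, i + 1] @ ys) (p, q, r) = 1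
    \<and> (\<forall>\<tau> \<in> triples w. \<tau> \<noteq> (p, q, r) \<longrightarrow>
         Gamma n (xs @ [i, i + 1, i] @ ys) \<tau> = Gamma n (xs @ [i + 1, i, i + 1] @ ys) \<tau>)"
proof -
  let ?a = "xs @ [i, i + 1, i] @ ys" and ?b = "xs @ [i + 1, i, i + 1] @ ys"
  have b: "?b \<in> reduced_words n w" using braid_red[of ?a xs i ys ?b] a by simp
  have v: "set ?a \<subseteq> {1..n - 1}" using reduced_valid[OF a] .
  have lu: "length u = n" by (simp add: id_word_props u_def)
  have ij: "1 \<le> i" "i + 1 < n" using v by auto
  have il: "1 \<le> i" "i < length u" "Suc i < length u" using ij lu by auto
  let ?s1 = "swap_at i u" let ?s2 = "swap_at (Suc i) ?s1" let ?s3 = "swap_at i ?s2"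
  let ?t1 = "swap_at (Suc i) u" let ?t2 = "swap_at i ?t1"
  have e1: "?s1 ! i = p" "?s1 ! (i - Suc 0) = q" "?s1 ! Suc i = r"
    using il unfolding p_def q_def r_def by (simp_all add: nth_swap_at)
  have e2: "?s2 ! (i - Suc 0) = q" "?s2 ! i = r" "?s2 ! Suc i = p"
    using il e1 by (simp_all add: nth_swap_at)
  have e3: "?s3 ! (i - Suc 0) = r" "?s3 ! i = q"
    using il e2 by (simp_all add: nth_swap_at)
  have f1: "?t1 ! (i - Suc 0) = p" "?t1 ! i = r" "?t1 ! Suc i = q"
    using il unfolding p_def q_def r_def by (simp_all add: nth_swap_at)
  have f2: "?t2 ! i = p" "?t2 ! Suc i = q"
    using il f1 by (simp_all add: nth_swap_at)
  have Des_pre: "j \<in> Des (act (c @ [j]) (id_word n))" if "(c @ [j]) @ d = ?a" for c j d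
  proof -
    have "c @ [j] \<in> reduced_words n (act (c @ [j]) (id_word n))"
      using reduced_prefix[of "c @ [j]" d n w] a that by simp
    then show ?thesis using reduced_prefix1 by blast
  qed
  have D1: "i \<in> Des ?s1" using Des_pre[of xs i "[i + 1, i] @ ys"] by (simp add: u_def)
  have D2: "Suc i \<in> Des ?s2"
    using Des_pre[of "xs @ [i]" "i + 1" "i # ys"] by (simp add: u_def)
  have D3: "i \<in> Des ?s3"
    using Des_pre[of "xs @ [i, i + 1]" i ys] by (simp add: u_def)
  have pq: "p < q" using D1 e1 unfolding Des_def by simp
  have pr: "p < r" using D2 e2 unfolding Des_def by simp
  have qr: "q < r" using D3 e3 unfolding Des_def by simp
  let ?Y = "pl ys (act [i, i + 1, i] u)"
  have pa: "pl [i, i + 1, i] u = [{p, q}, {p, r}, {q, r}]"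
    using e1 e2 unfolding p_def q_def by simp
  have pb: "pl [i + 1, i, i + 1] u = [{q, r}, {p, r}, {p, q}]"
    using f1 f2 unfolding q_def r_def by (simp add: insert_commute)
  have La: "pl ?a (id_word n) = pl xs (id_word n) @ [{p, q}, {p, r}, {q, r}] @ ?Y"
    using pa unfolding u_def by simp
  have Lb: "pl ?b (id_word n) = pl xs (id_word n) @ [{q, r}, {p, r}, {p, q}] @ ?Y"
    using pb act_braid[of i u] il unfolding u_def by simp
  note Ra = reduced_pl[OF a] and Rb = reduced_pl[OF b]
  have dw: "distinct w" using Ra is_perm_distinct by blast
  have inv: "{p, q} \<in> invs w" "{q, r} \<in> invs w" using Ra La by auto
  have T: "(p, q, r) \<in> triples w" using triples_char[OF dw] inv pq qr by auto
  let ?k = "length (pl xs (id_word n))"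
  have Ga: "Gamma n ?a (p, q, r) = 0"
    using Gamma_idx[of ?a n ?k "?k + 2" q p r] Ra La by (simp add: nth_append insert_commute)
  have Gb: "Gamma n ?b (p, q, r) = 1"
    using Gamma_idx[of ?b n "?k + 2" ?k q p r] Rb Lb by (simp add: nth_append insert_commute)
  have sM: "set [{p, q}, {p, r}, {q, r}] = set [{q, r}, {p, r}, {p, q}]" by auto
  have rest: "Gamma n ?a \<tau> = Gamma n ?b \<tau>" if "\<tau> \<in> triples w" "\<tau> \<noteq> (p, q, r)" for \<tau>
  proof -
    obtain x y z where t: "\<tau> = (x, y, z)" by (cases \<tau>) auto
    have tt: "(x, y, z) \<in> triples w" using that t by simp
    have xyz: "x < y" "y < z" using tt triples_char[OF dw] by simp_all
    have nb: "\<not> ({x, y} \<in> set [{p, q}, {p, r}, {q, r}] \<and> {y, z} \<in> set [{p, q}, {p, r}, {q, r}])"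
    proof
      assume h: "{x, y} \<in> set [{p, q}, {p, r}, {q, r}] \<and> {y, z} \<in> set [{p, q}, {p, r}, {q, r}]"
      have "x = p \<and> y = q \<and> z = r" using three[OF xyz pq qr] h by simp
      then show False using that t by simp
    qed
    show ?thesis unfolding t by (rule Gamma_block[OF a b La Lb sM _ tt nb]) simp
  qed
  show ?thesis using T Ga Gb rest by blast
qed



lemma comm_step_app: "comm_step a b \<Longrightarrow> comm_step (a @ c) (b @ c)"
proof (induction rule: comm_step.induct)
  case (1 i j xs ys)
  have "comm_step (xs @ [i, j] @ (ys @ c)) (xs @ [j, i] @ (ys @ c))" by (rule comm_step.intros) fact
  then show ?case by simp
qed

lemma comm_star_app: "comm_step\<^sup>*\<^sup>* a b \<Longrightarrow> comm_step\<^sup>*\<^sup>* (a @ c) (b @ c)"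
  by (induction rule: rtranclp_induct) (auto intro: rtranclp.rtrancl_into_rtrancl comm_step_app)

lemma comm_swap_last: "i \<ge> j + 2 \<or> j \<ge> i + 2 \<Longrightarrow> comm_step (x @ [i, j]) (x @ [j, i])"
proof -
  assume h: "i \<ge> j + 2 \<or> j \<ge> i + 2"
  have "comm_step (x @ [i, j] @ []) (x @ [j, i] @ [])" by (rule comm_step.intros) (rule h)
  then show ?thesis by simp
qed

definition dstep :: "nat list \<Rightarrow> nat list \<Rightarrow> bool" where
  "dstep a b \<longleftrightarrow> (\<exists>xs i ys. a = xs @ [i + 1, i, i + 1] @ ys \<and> b = xs @ [i, i + 1, i] @ ys)"

definition ustep :: "nat list \<Rightarrow> nat list \<Rightarrow> bool" where
  "ustep a b \<longleftrightarrow> (\<exists>xs i ys. a = xs @ [i, i + 1, i] @ ys \<and> b = xs @ [i + 1, i, i + 1] @ ys)"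

abbreviation RD where "RD \<equiv> (\<lambda>a b. comm_step a b \<or> dstep a b)\<^sup>*\<^sup>*"
abbreviation RU where "RU \<equiv> (\<lambda>a b. comm_step a b \<or> ustep a b)\<^sup>*\<^sup>*"

lemma dstep_app: "dstep a b \<Longrightarrow> dstep (a @ c) (b @ c)"
  unfolding dstep_def by (metis append.assoc)
lemma ustep_app: "ustep a b \<Longrightarrow> ustep (a @ c) (b @ c)"
  unfolding ustep_def by (metis append.assoc)

lemma RD_app: "RD a b \<Longrightarrow> RD (a @ c) (b @ c)"
  by (induction rule: rtranclp_induct) (auto intro: rtranclp.rtrancl_into_rtrancl comm_step_app dstep_app)
lemma RU_app: "RU a b \<Longrightarrow> RU (a @ c) (b @ c)"
  by (induction rule: rtranclp_induct) (auto intro: rtranclp.rtrancl_into_rtrancl comm_step_app ustep_app)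

lemma RD_comm: "comm_step\<^sup>*\<^sup>* a b \<Longrightarrow> RD a b"
  by (induction rule: rtranclp_induct) (auto intro: rtranclp.rtrancl_into_rtrancl)
lemma RU_comm: "comm_step\<^sup>*\<^sup>* a b \<Longrightarrow> RU a b"
  by (induction rule: rtranclp_induct) (auto intro: rtranclp.rtrancl_into_rtrancl)

lemma dstep_red: "dstep a b \<Longrightarrow> a \<in> reduced_words n w \<Longrightarrow> b \<in> reduced_words n w"
  unfolding dstep_def using braid_red by blast
lemma ustep_red: "ustep a b \<Longrightarrow> a \<in> reduced_words n w \<Longrightarrow> b \<in> reduced_words n w"
  unfolding ustep_def using braid_red by blast

lemma RD_red: "RD a b \<Longrightarrow> a \<in> reduced_words n w \<Longrightarrow> b \<in> reduced_words n w"
  by (induction rule: rtranclp_induct) (auto intro: comm_step_red dstep_red)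
lemma RU_red: "RU a b \<Longrightarrow> a \<in> reduced_words n w \<Longrightarrow> b \<in> reduced_words n w"
  by (induction rule: rtranclp_induct) (auto intro: comm_step_red ustep_red)

lemma prefix_inc:
  assumes "distinct w" "\<And>e. e \<in> Des w \<Longrightarrow> m \<le> e"
  shows "i < j \<Longrightarrow> j + 1 \<le> m \<Longrightarrow> j < length w \<Longrightarrow> w ! i < w ! j"
proof (induction j)
  case 0 then show ?case by simp
next
  case (Suc j)
  have "Suc j \<notin> Des w" using assms(2)[of "Suc j"] Suc.prems by auto
  then have "\<not> w ! j > w ! Suc j" using Suc.prems unfolding Des_def by auto
  moreover have "w ! j \<noteq> w ! Suc j" using assms(1) Suc.prems nth_eq_iff_index_eq by fastforce
  ultimately have "w ! j < w ! Suc j" by simp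
  then show ?case using Suc by (cases "i = j") auto
qed

lemma suffix_inc:
  assumes "distinct w" "\<And>e. e \<in> Des w \<Longrightarrow> e \<le> m"
  shows "m \<le> i \<Longrightarrow> i < j \<Longrightarrow> j < length w \<Longrightarrow> w ! i < w ! j"
proof (induction j)
  case 0 then show ?case by simp
next
  case (Suc j)
  have "Suc j \<notin> Des w" using assms(2)[of "Suc j"] Suc.prems by auto
  then have "\<not> w ! j > w ! Suc j" using Suc.prems unfolding Des_def by auto
  moreover have "w ! j \<noteq> w ! Suc j" using assms(1) Suc.prems nth_eq_iff_index_eq by fastforce
  ultimately have "w ! j < w ! Suc j" by simp
  then show ?case using Suc by (cases "i = j") auto
qed

lemma Des_mem: "e \<in> Des u \<longleftrightarrow> 1 \<le> e \<and> e < length u \<and> u ! (e - 1) > u ! e"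
  unfolding Des_def by simp

lemma H_min:
  "is_perm n u \<Longrightarrow> ninv u = k \<Longrightarrow> d \<in> Des u \<Longrightarrow> (\<forall>i < d - 1. u ! i < u ! (d - 1))
   \<Longrightarrow> \<exists>x. comm_step\<^sup>*\<^sup>* (a_min u) (x @ [d])"
proof (induction k arbitrary: u)
  case 0
  then show ?case using Des_ninv(2)[OF 0(1,3)] by simp
next
  case (Suc k)
  have pos: "ninv u > 0" using Suc.prems by simp
  let ?r = "Min (Des u)"
  have st: "a_min u = a_min (swap_at ?r u) @ [?r]" and rD: "?r \<in> Des u" using amin_step[OF Suc.prems(1) pos] by auto
  have rd: "?r \<le> d" using Suc.prems(3) by simp
  have ln: "length u = n" using Suc.prems(1) unfolding is_perm_def by simp
  have r1: "1 \<le> ?r" "?r < length u" "u ! (?r - 1) > u ! ?r" using rD unfolding Des_def by auto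
  have d1: "1 \<le> d" "d < length u" "u ! (d - 1) > u ! d" using Suc.prems(3) unfolding Des_def by auto
  show ?case
  proof (cases "?r = d")
    case True
    then show ?thesis using st by auto
  next
    case False
    have "?r \<noteq> d - 1"
    proof
      assume e: "?r = d - 1"
      then have "u ! (?r - 1) < u ! (d - 1)" using Suc.prems(4) r1 by auto
      then show False using r1 e by simp
    qed
    then have rd2: "?r + 2 \<le> d" using rd False by arith
    let ?v = "swap_at ?r u"
    have pv: "is_perm n ?v" and nv: "ninv ?v = k" using Des_ninv[OF Suc.prems(1) rD] Suc.prems(2) by auto
    have vd: "?v ! (d - 1) = u ! (d - 1)" "?v ! d = u ! d"
      using rd2 r1 d1 by (simp_all add: nth_swap_at)
    have dv: "d \<in> Des ?v" using vd d1 unfolding Des_def by simp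
    have cv: "\<forall>i < d - 1. ?v ! i < ?v ! (d - 1)"
    proof (intro allI impI)
      fix i assume i: "i < d - 1"
      have "?v ! i = u ! i \<or> (?v ! i = u ! ?r \<and> ?r < d - 1) \<or> (?v ! i = u ! (?r - 1) \<and> ?r - 1 < d - 1)"
        using i rd2 r1 d1 by (auto simp: nth_swap_at)
      then show "?v ! i < ?v ! (d - 1)" using Suc.prems(4) i vd by auto
    qed
    obtain x where x: "comm_step\<^sup>*\<^sup>* (a_min ?v) (x @ [d])" using Suc.IH[OF pv nv dv cv] by blast
    have "comm_step\<^sup>*\<^sup>* (a_min u) (x @ [d] @ [?r])" using comm_star_app[OF x, of "[?r]"] st by simp
    moreover have "comm_step (x @ [d, ?r]) (x @ [?r, d])" using comm_swap_last rd2 by simp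
    ultimately have "comm_step\<^sup>*\<^sup>* (a_min u) ((x @ [?r]) @ [d])"
      by (simp add: rtranclp.rtrancl_into_rtrancl)
    then show ?thesis by blast
  qed
qed

lemma S_min: "a \<in> reduced_words n w \<Longrightarrow> RD a (a_min w)"
proof (induction "length a" arbitrary: a w rule: less_induct)
  case less
  have pw: "is_perm n w" using reduced_pl[OF less.prems] by blast
  have dw: "distinct w" using is_perm_distinct[OF pw] .
  show ?case
  proof (cases a rule: rev_exhaust)
    case Nil
    then have "ninv w = 0" using less.prems unfolding reduced_words_def by simp
    then show ?thesis using Nil by (simp add: a_min_def)
  next
    case (snoc b j)
    note P1 = reduced_prefix1[of b j n w, folded snoc, OF less.prems]
    have jD: "j \<in> Des w" and bR: "b \<in> reduced_words n (swap_at j w)" using P1 by auto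
    have pos: "ninv w > 0" using Des_ninv(2)[OF pw jD] .
    let ?m = "Min (Des w)"
    have stw: "a_min w = a_min (swap_at ?m w) @ [?m]" and mD: "?m \<in> Des w"
      using amin_step[OF pw pos] by auto
    have mj: "?m \<le> j" using jD by simp
    have mmin: "\<And>e. e \<in> Des w \<Longrightarrow> ?m \<le> e" by simp
    have lb: "length b < length a" using snoc by simp
    have ln: "length w = n" using pw unfolding is_perm_def by simp
    have m1: "1 \<le> ?m" "?m < length w" "w ! (?m - 1) > w ! ?m" using mD unfolding Des_mem by auto
    have j1: "1 \<le> j" "j < length w" "w ! (j - 1) > w ! j" using jD unfolding Des_mem by auto
    let ?v = "swap_at j w"
    have pv: "is_perm n ?v" using Des_ninv(3)[OF pw jD] .
    have IHb: "RD b (a_min ?v)" using less.hyps[OF lb bR] .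
    have fin: "RD a (a_min w)" if c: "RD a (c @ [?m])" for c
    proof -
      have cR: "c @ [?m] \<in> reduced_words n w" using RD_red[OF c less.prems] .
      have cR': "c \<in> reduced_words n (swap_at ?m w)" using reduced_prefix1[OF cR] by blast
      have "length (c @ [?m]) = length a" using cR less.prems unfolding reduced_words_def by simp
      then have "length c < length a" by simp
      from less.hyps[OF this cR'] have "RD c (a_min (swap_at ?m w))" .
      from RD_app[OF this, of "[?m]"] have "RD (c @ [?m]) (a_min w)" using stw by simp
      with c show ?thesis by (rule rtranclp_trans)
    qed
    show ?thesis
    proof (cases "j = ?m")
      case True
      show ?thesis using RD_app[OF IHb, of "[j]"] stw True snoc by simp
    next
      case False
      then have mj': "?m < j" using mj by simp
      have vmin: "Min (Des ?v) = ?m"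
        if mv: "?m \<in> Des ?v" and same: "\<And>e. e < ?m \<Longrightarrow> e \<in> Des ?v \<Longrightarrow> e \<in> Des w"
      proof (rule Min_eqI)
        show "finite (Des ?v)" by simp
        show "?m \<in> Des ?v" by fact
        fix e assume "e \<in> Des ?v"
        then show "?m \<le> e" using same[of e] mmin[of e] by (cases "e < ?m") auto
      qed
      show ?thesis
      proof (cases "j = ?m + 1")
        case False
        then have jm2: "?m + 2 \<le> j" using mj' by simp
        have mv: "?m \<in> Des ?v" using m1 j1 jm2 unfolding Des_mem by (simp add: nth_swap_at)
        have same: "e \<in> Des w" if "e < ?m" "e \<in> Des ?v" for e
          using that j1 jm2 unfolding Des_mem by (auto simp: nth_swap_at)
        have vm: "Min (Des ?v) = ?m" using vmin[OF mv same] .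
        have posv: "ninv ?v > 0" using Des_ninv(2)[OF pv mv] .
        have stv: "a_min ?v = a_min (swap_at ?m ?v) @ [?m]" using amin_step(1)[OF pv posv] vm by simp
        have s1: "RD a (a_min (swap_at ?m ?v) @ [?m, j])" using RD_app[OF IHb, of "[j]"] stv snoc by simp
        have s2: "comm_step (a_min (swap_at ?m ?v) @ [?m, j]) (a_min (swap_at ?m ?v) @ [j, ?m])"
          using comm_swap_last jm2 by simp
        have "RD a (a_min (swap_at ?m ?v) @ [j, ?m])"
          by (rule rtranclp.rtrancl_into_rtrancl[OF s1]) (use s2 in blast)
        then have "RD a ((a_min (swap_at ?m ?v) @ [j]) @ [?m])" by simp
        then show ?thesis by (rule fin)
      next
        case True
        have v1: "?v ! (?m - 1) = w ! (?m - 1)" "?v ! ?m = w ! (?m + 1)" "?v ! (?m + 1) = w ! ?m"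
          using True m1 j1 by (simp_all add: nth_swap_at)
        have mv: "?m \<in> Des ?v" using m1 j1 True v1 unfolding Des_mem by simp
        have same: "e \<in> Des w" if "e < ?m" "e \<in> Des ?v" for e
          using that j1 True unfolding Des_mem by (auto simp: nth_swap_at)
        have vm: "Min (Des ?v) = ?m" using vmin[OF mv same] .
        have posv: "ninv ?v > 0" using Des_ninv(2)[OF pv mv] .
        have stv: "a_min ?v = a_min (swap_at ?m ?v) @ [?m]" using amin_step(1)[OF pv posv] vm by simp
        let ?u = "swap_at ?m ?v"
        have pu: "is_perm n ?u" using Des_ninv(3)[OF pv mv] .
        have u1: "?u ! (?m - 1) = w ! (?m + 1)" "?u ! ?m = w ! (?m - 1)" "?u ! (?m + 1) = w ! ?m"
          using v1 m1 j1 True by (simp_all add: nth_swap_at)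
        have uo: "?u ! i = w ! i" if "i < ?m - 1" for i using that m1 True j1 by (simp add: nth_swap_at)
        have du: "?m + 1 \<in> Des ?u" using u1 j1 m1 True unfolding Des_mem by simp
        have cu: "\<forall>i < ?m + 1 - 1. ?u ! i < ?u ! (?m + 1 - 1)"
        proof (intro allI impI)
          fix i assume i: "i < ?m + 1 - 1"
          show "?u ! i < ?u ! (?m + 1 - 1)"
          proof (cases "i = ?m - 1")
            case True
            have c1: "w ! (?m + 1) < w ! ?m" using j1 \<open>j = ?m + 1\<close> by simp
            have c2: "w ! (?m + 1) < w ! (?m - 1)" using c1 m1(3) by linarith
            show ?thesis using True u1 c2 by simp
          next
            case False
            then have "i < ?m - 1" using i by simp
            then show ?thesis using uo[of i] u1 prefix_inc[OF dw mmin, of i "?m - 1"] m1 by simp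
          qed
        qed
        obtain x where x: "comm_step\<^sup>*\<^sup>* (a_min ?u) (x @ [?m + 1])"
          using H_min[OF pu refl du cu] by blast
        have s1: "RD a (a_min ?u @ [?m] @ [?m + 1])" using RD_app[OF IHb, of "[j]"] stv snoc True by simp
        have s2: "RD (a_min ?u @ [?m] @ [?m + 1]) (x @ [?m + 1] @ [?m] @ [?m + 1])"
          using RD_comm[OF comm_star_app[OF x, of "[?m] @ [?m + 1]"]] by simp
        have s3: "dstep (x @ [?m + 1, ?m, ?m + 1]) (x @ [?m, ?m + 1, ?m])"
          unfolding dstep_def by (intro exI[of _ x] exI[of _ ?m] exI[of _ "[]"]) simp
        have s12: "RD a (x @ [?m + 1, ?m, ?m + 1])" using rtranclp_trans[OF s1 s2] by simp
        have "RD a (x @ [?m, ?m + 1, ?m])"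
          by (rule rtranclp.rtrancl_into_rtrancl[OF s12]) (use s3 in blast)
        then have "RD a ((x @ [?m, ?m + 1]) @ [?m])" by simp
        then show ?thesis by (rule fin)
      qed
    qed
  qed
qed



lemma H_max:
  "is_perm n u \<Longrightarrow> ninv u = k \<Longrightarrow> d \<in> Des u \<Longrightarrow> (\<forall>i. d < i \<and> i < length u \<longrightarrow> u ! d < u ! i)
   \<Longrightarrow> \<exists>x. comm_step\<^sup>*\<^sup>* (a_max u) (x @ [d])"
proof (induction k arbitrary: u)
  case 0
  then show ?case using Des_ninv(2)[OF 0(1,3)] by simp
next
  case (Suc k)
  have pos: "ninv u > 0" using Suc.prems by simp
  let ?r = "Max (Des u)"
  have st: "a_max u = a_max (swap_at ?r u) @ [?r]" and rD: "?r \<in> Des u" using amax_step[OF Suc.prems(1) pos] by auto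
  have rd: "d \<le> ?r" using Suc.prems(3) by simp
  have r1: "1 \<le> ?r" "?r < length u" "u ! (?r - 1) > u ! ?r" using rD unfolding Des_mem by auto
  have d1: "1 \<le> d" "d < length u" "u ! (d - 1) > u ! d" using Suc.prems(3) unfolding Des_mem by auto
  show ?case
  proof (cases "?r = d")
    case True
    then show ?thesis using st by auto
  next
    case False
    have "?r \<noteq> d + 1"
    proof
      assume e: "?r = d + 1"
      then have "u ! d < u ! ?r" using Suc.prems(4) r1 by auto
      then show False using r1 e by simp
    qed
    then have rd2: "d + 2 \<le> ?r" using rd False by arith
    let ?v = "swap_at ?r u"
    have pv: "is_perm n ?v" and nv: "ninv ?v = k" using Des_ninv[OF Suc.prems(1) rD] Suc.prems(2) by auto
    have vd: "?v ! (d - 1) = u ! (d - 1)" "?v ! d = u ! d"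
      using rd2 r1 d1 by (simp_all add: nth_swap_at)
    have dv: "d \<in> Des ?v" using vd d1 unfolding Des_mem by simp
    have cv: "\<forall>i. d < i \<and> i < length ?v \<longrightarrow> ?v ! d < ?v ! i"
    proof (intro allI impI)
      fix i assume i: "d < i \<and> i < length ?v"
      have "?v ! i = u ! i \<or> (?v ! i = u ! ?r \<and> d < ?r) \<or> (?v ! i = u ! (?r - 1) \<and> d < ?r - 1)"
        using i rd2 r1 d1 by (auto simp: nth_swap_at)
      then show "?v ! d < ?v ! i" using Suc.prems(4) i vd r1 by auto
    qed
    obtain x where x: "comm_step\<^sup>*\<^sup>* (a_max ?v) (x @ [d])" using Suc.IH[OF pv nv dv cv] by blast
    have "comm_step\<^sup>*\<^sup>* (a_max u) (x @ [d] @ [?r])" using comm_star_app[OF x, of "[?r]"] st by simp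
    moreover have "comm_step (x @ [d, ?r]) (x @ [?r, d])" using comm_swap_last rd2 by simp
    ultimately have "comm_step\<^sup>*\<^sup>* (a_max u) ((x @ [?r]) @ [d])"
      by (simp add: rtranclp.rtrancl_into_rtrancl)
    then show ?thesis by blast
  qed
qed

lemma S_max: "a \<in> reduced_words n w \<Longrightarrow> RU a (a_max w)"
proof (induction "length a" arbitrary: a w rule: less_induct)
  case less
  have pw: "is_perm n w" using reduced_pl[OF less.prems] by blast
  have dw: "distinct w" using is_perm_distinct[OF pw] .
  show ?case
  proof (cases a rule: rev_exhaust)
    case Nil
    then have "ninv w = 0" using less.prems unfolding reduced_words_def by simp
    then show ?thesis using Nil by (simp add: a_max_def)
  next
    case (snoc b j)
    note P1 = reduced_prefix1[of b j n w, folded snoc, OF less.prems]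
    have jD: "j \<in> Des w" and bR: "b \<in> reduced_words n (swap_at j w)" using P1 by auto
    have pos: "ninv w > 0" using Des_ninv(2)[OF pw jD] .
    let ?m = "Max (Des w)"
    have stw: "a_max w = a_max (swap_at ?m w) @ [?m]" and mD: "?m \<in> Des w"
      using amax_step[OF pw pos] by auto
    have mj: "j \<le> ?m" using jD by simp
    have mmax: "\<And>e. e \<in> Des w \<Longrightarrow> e \<le> ?m" by simp
    have lb: "length b < length a" using snoc by simp
    have m1: "1 \<le> ?m" "?m < length w" "w ! (?m - 1) > w ! ?m" using mD unfolding Des_mem by auto
    have j1: "1 \<le> j" "j < length w" "w ! (j - 1) > w ! j" using jD unfolding Des_mem by auto
    let ?v = "swap_at j w"
    have pv: "is_perm n ?v" using Des_ninv(3)[OF pw jD] .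
    have IHb: "RU b (a_max ?v)" using less.hyps[OF lb bR] .
    have fin: "RU a (a_max w)" if c: "RU a (c @ [?m])" for c
    proof -
      have cR: "c @ [?m] \<in> reduced_words n w" using RU_red[OF c less.prems] .
      have cR': "c \<in> reduced_words n (swap_at ?m w)" using reduced_prefix1[OF cR] by blast
      have "length (c @ [?m]) = length a" using cR less.prems unfolding reduced_words_def by simp
      then have "length c < length a" by simp
      from less.hyps[OF this cR'] have "RU c (a_max (swap_at ?m w))" .
      from RU_app[OF this, of "[?m]"] have "RU (c @ [?m]) (a_max w)" using stw by simp
      with c show ?thesis by (rule rtranclp_trans)
    qed
    show ?thesis
    proof (cases "j = ?m")
      case True
      show ?thesis using RU_app[OF IHb, of "[j]"] stw True snoc by simp
    next
      case False
      then have mj': "j < ?m" using mj by simp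
      have vmax: "Max (Des ?v) = ?m"
        if mv: "?m \<in> Des ?v" and same: "\<And>e. ?m < e \<Longrightarrow> e \<in> Des ?v \<Longrightarrow> e \<in> Des w"
      proof (rule Max_eqI)
        show "finite (Des ?v)" by simp
        show "?m \<in> Des ?v" by fact
        fix e assume "e \<in> Des ?v"
        then show "e \<le> ?m" using same[of e] mmax[of e] by (cases "?m < e") auto
      qed
      show ?thesis
      proof (cases "j + 1 = ?m")
        case False
        then have jm2: "j + 2 \<le> ?m" using mj' by simp
        have mv: "?m \<in> Des ?v" using m1 j1 jm2 unfolding Des_mem by (simp add: nth_swap_at)
        have same: "e \<in> Des w" if "?m < e" "e \<in> Des ?v" for e
          using that j1 jm2 unfolding Des_mem by (auto simp: nth_swap_at)
        have vm: "Max (Des ?v) = ?m" using vmax[OF mv same] .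
        have posv: "ninv ?v > 0" using Des_ninv(2)[OF pv mv] .
        have stv: "a_max ?v = a_max (swap_at ?m ?v) @ [?m]" using amax_step(1)[OF pv posv] vm by simp
        have s1: "RU a (a_max (swap_at ?m ?v) @ [?m, j])" using RU_app[OF IHb, of "[j]"] stv snoc by simp
        have s2: "comm_step (a_max (swap_at ?m ?v) @ [?m, j]) (a_max (swap_at ?m ?v) @ [j, ?m])"
          using comm_swap_last jm2 by simp
        have "RU a (a_max (swap_at ?m ?v) @ [j, ?m])"
          by (rule rtranclp.rtrancl_into_rtrancl[OF s1]) (use s2 in blast)
        then have "RU a ((a_max (swap_at ?m ?v) @ [j]) @ [?m])" by simp
        then show ?thesis by (rule fin)
      next
        case True
        have jm: "j = ?m - 1" "2 \<le> ?m" using True j1 by auto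
        have c1: "w ! (?m - Suc 0) < w ! (?m - Suc (Suc 0))" using j1 jm by (simp add: numeral_2_eq_2)
        have c2: "w ! ?m < w ! (?m - Suc (Suc 0))" using c1 m1(3) by (simp add: One_nat_def)
        have v1: "?v ! (?m - Suc (Suc 0)) = w ! (?m - Suc 0)" "?v ! (?m - Suc 0) = w ! (?m - Suc (Suc 0))" "?v ! ?m = w ! ?m"
          using jm m1 j1 by (simp_all add: nth_swap_at numeral_2_eq_2)
        have mv: "?m \<in> Des ?v" using m1 v1 c2 unfolding Des_mem by simp
        have same: "e \<in> Des w" if "?m < e" "e \<in> Des ?v" for e
          using that j1 jm unfolding Des_mem by (auto simp: nth_swap_at)
        have vm: "Max (Des ?v) = ?m" using vmax[OF mv same] .
        have posv: "ninv ?v > 0" using Des_ninv(2)[OF pv mv] .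
        have stv: "a_max ?v = a_max (swap_at ?m ?v) @ [?m]" using amax_step(1)[OF pv posv] vm by simp
        let ?u = "swap_at ?m ?v"
        have pu: "is_perm n ?u" using Des_ninv(3)[OF pv mv] .
        have u1: "?u ! (?m - Suc (Suc 0)) = w ! (?m - Suc 0)" "?u ! (?m - Suc 0) = w ! ?m" "?u ! ?m = w ! (?m - Suc (Suc 0))"
          using v1 m1 j1 jm by (simp_all add: nth_swap_at numeral_2_eq_2)
        have uo: "?u ! i = w ! i" if "?m < i" "i < length w" for i using that m1 jm j1 by (simp add: nth_swap_at)
        have du: "?m - 1 \<in> Des ?u" using u1 j1 m1 jm unfolding Des_mem
          by (simp add: numeral_2_eq_2 del: sw1 sw1' sw2 sw2' sw3 sw3' sw4 sw5)
        have cu: "\<forall>i. ?m - 1 < i \<and> i < length ?u \<longrightarrow> ?u ! (?m - 1) < ?u ! i"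
        proof (intro allI impI)
          fix i assume i: "?m - 1 < i \<and> i < length ?u"
          show "?u ! (?m - 1) < ?u ! i"
          proof (cases "i = ?m")
            case True then show ?thesis using u1 c2 by simp
          next
            case False
            then have "?m < i" "i < length w" using i m1 by auto
            then show ?thesis using uo[of i] u1 suffix_inc[OF dw mmax, of ?m i] by simp
          qed
        qed
        obtain x where x: "comm_step\<^sup>*\<^sup>* (a_max ?u) (x @ [?m - 1])"
          using H_max[OF pu refl du cu] by blast
        have s1: "RU a (a_max ?u @ [?m] @ [?m - 1])" using RU_app[OF IHb, of "[j]"] stv snoc jm by simp
        have s2: "RU (a_max ?u @ [?m] @ [?m - 1]) (x @ [?m - 1] @ [?m] @ [?m - 1])"
          using RU_comm[OF comm_star_app[OF x, of "[?m] @ [?m - 1]"]] by simp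
        have s3: "ustep (x @ [?m - 1, ?m, ?m - 1]) (x @ [?m, ?m - 1, ?m])"
          unfolding ustep_def using jm
          by (intro exI[of _ x] exI[of _ "?m - 1"] exI[of _ "[]"]) simp
        have s12: "RU a (x @ [?m - 1, ?m, ?m - 1])" using rtranclp_trans[OF s1 s2] by simp
        have "RU a (x @ [?m, ?m - 1, ?m])"
          by (rule rtranclp.rtrancl_into_rtrancl[OF s12]) (use s3 in blast)
        then have "RU a ((x @ [?m, ?m - 1]) @ [?m])" by simp
        then show ?thesis by (rule fin)
      qed
    qed
  qed
qed



definition Dset :: "nat \<Rightarrow> nat list \<Rightarrow> nat list \<Rightarrow> nat list \<Rightarrow> (nat \<times> nat \<times> nat) set" where
  "Dset n w a b = {\<tau> \<in> triples w. Gamma n a \<tau> \<noteq> Gamma n b \<tau>}"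

lemma Gamma_amin:
  "is_perm n w \<Longrightarrow> ninv w = k \<Longrightarrow> \<tau> \<in> triples w \<Longrightarrow> Gamma n (a_min w) \<tau> = 0"
proof (induction k arbitrary: w \<tau>)
  case 0
  then have "w = id_word n" using ninv0_id by blast
  then have "triples w = {}" using triples_char[OF id_word_props(3)] by auto
  then show ?case using 0 by simp
next
  case (Suc k)
  have pw: "is_perm n w" by fact
  have dw: "distinct w" using is_perm_distinct[OF pw] .
  have pos: "ninv w > 0" using Suc.prems by simp
  let ?m = "Min (Des w)" let ?v = "swap_at ?m w"
  have st: "a_min w = a_min ?v @ [?m]" and mD: "?m \<in> Des w" using amin_step[OF pw pos] by auto
  have mmin: "\<And>e. e \<in> Des w \<Longrightarrow> ?m \<le> e" by simp
  have m1: "1 \<le> ?m" "?m < length w" "w ! (?m - 1) > w ! ?m" using mD unfolding Des_mem by auto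
  have pv: "is_perm n ?v" and nv: "ninv ?v = k" using Des_ninv[OF pw mD] Suc.prems by auto
  have Rv: "a_min ?v \<in> reduced_words n ?v" using amin_red[OF pv] .
  have Rw: "a_min w \<in> reduced_words n w" using amin_red[OF pw] .
  note RPv = reduced_pl[OF Rv] and RPw = reduced_pl[OF Rw]
  let ?Lv = "pl (a_min ?v) (id_word n)"
  let ?S0 = "{w ! ?m, w ! (?m - 1)}"
  have v1: "?v ! (?m - 1) = w ! ?m" "?v ! ?m = w ! (?m - 1)" using m1 by (simp_all add: nth_swap_at)
  have L: "pl (a_min w) (id_word n) = ?Lv @ [?S0]"
    using st RPv v1 by simp
  have dL: "distinct (?Lv @ [?S0])" using RPw L by simp
  obtain x y z where t: "\<tau> = (x, y, z)" by (cases \<tau>) auto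
  have tt: "(x, y, z) \<in> triples w" using Suc.prems t by simp
  have xyz: "x < y" "y < z" "{x, y} \<in> invs w" "{y, z} \<in> invs w" using tt triples_char[OF dw] by auto
  have inL: "{x, y} \<in> set (?Lv @ [?S0])" "{y, z} \<in> set (?Lv @ [?S0])" using xyz RPw L by auto
  have ne: "{x, y} \<noteq> {y, z}" using xyz by (auto simp: doubleton_eq_iff)
  show ?case
  proof (cases "{y, z} = ?S0")
    case True
    then have "{x, y} \<in> set ?Lv" using inL ne by auto
    then obtain I where I: "I < length ?Lv" "?Lv ! I = {y, x}" by (metis in_set_conv_nth insert_commute)
    have "Gamma n (a_min w) (x, y, z) = (if length ?Lv < I then 1 else 0)"
      using Gamma_idx[of "a_min w" n I "length ?Lv" y x z] L dL I True st
      by (simp add: nth_append insert_commute)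
    then show ?thesis using I t by simp
  next
    case False
    show ?thesis
    proof (cases "{x, y} = ?S0")
      case True
      then have yx: "y = w ! (?m - 1)" "x = w ! ?m" using xyz m1 by (auto simp: doubleton_eq_iff)
      obtain i j where ij: "i < j" "j < length w" "w ! i = z" "w ! j = y" using invs_ord[OF dw xyz(4) xyz(2)] by blast
      have "j = ?m - 1" using ij yx nth_eq_iff_index_eq[OF dw, of j "?m - 1"] m1 by simp
      then have "w ! i < w ! (?m - 1)" using prefix_inc[OF dw mmin, of i "?m - 1"] ij m1 by simp
      then show ?thesis using ij yx xyz by simp
    next
      case False2: False
      have inv: "{x, y} \<in> invs ?v" "{y, z} \<in> invs ?v" using inL False False2 RPv by auto
      have tv: "(x, y, z) \<in> triples ?v" using triples_char[OF is_perm_distinct[OF pv]] inv xyz by simp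
      have IH: "Gamma n (a_min ?v) (x, y, z) = 0" using Suc.IH[OF pv nv tv] .
      obtain I where I: "I < length ?Lv" "?Lv ! I = {y, x}"
        using inv RPv by (metis in_set_conv_nth insert_commute)
      obtain J where J: "J < length ?Lv" "?Lv ! J = {z, y}"
        using inv RPv by (metis in_set_conv_nth insert_commute)
      have "Gamma n (a_min ?v) (x, y, z) = (if J < I then 1 else 0)"
        using Gamma_idx[of "a_min ?v" n I J y x z] RPv I J by simp
      moreover have "Gamma n (a_min w) (x, y, z) = (if J < I then 1 else 0)"
        using Gamma_idx[of "a_min w" n I J y x z] L dL I J st by (simp add: nth_append)
      ultimately show ?thesis using IH t by simp
    qed
  qed
qed

lemma Gamma_amax:
  "is_perm n w \<Longrightarrow> ninv w = k \<Longrightarrow> \<tau> \<in> triples w \<Longrightarrow> Gamma n (a_max w) \<tau> = 1"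
proof (induction k arbitrary: w \<tau>)
  case 0
  then have "w = id_word n" using ninv0_id by blast
  then have "triples w = {}" using triples_char[OF id_word_props(3)] by auto
  then show ?case using 0 by simp
next
  case (Suc k)
  have pw: "is_perm n w" by fact
  have dw: "distinct w" using is_perm_distinct[OF pw] .
  have pos: "ninv w > 0" using Suc.prems by simp
  let ?m = "Max (Des w)" let ?v = "swap_at ?m w"
  have st: "a_max w = a_max ?v @ [?m]" and mD: "?m \<in> Des w" using amax_step[OF pw pos] by auto
  have mmax: "\<And>e. e \<in> Des w \<Longrightarrow> e \<le> ?m" by simp
  have m1: "1 \<le> ?m" "?m < length w" "w ! (?m - 1) > w ! ?m" using mD unfolding Des_mem by auto
  have pv: "is_perm n ?v" and nv: "ninv ?v = k" using Des_ninv[OF pw mD] Suc.prems by auto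
  have Rv: "a_max ?v \<in> reduced_words n ?v" using amax_red[OF pv] .
  have Rw: "a_max w \<in> reduced_words n w" using amax_red[OF pw] .
  note RPv = reduced_pl[OF Rv] and RPw = reduced_pl[OF Rw]
  let ?Lv = "pl (a_max ?v) (id_word n)"
  let ?S0 = "{w ! ?m, w ! (?m - 1)}"
  have v1: "?v ! (?m - 1) = w ! ?m" "?v ! ?m = w ! (?m - 1)" using m1 by (simp_all add: nth_swap_at)
  have L: "pl (a_max w) (id_word n) = ?Lv @ [?S0]"
    using st RPv v1 by simp
  have dL: "distinct (?Lv @ [?S0])" using RPw L by simp
  obtain x y z where t: "\<tau> = (x, y, z)" by (cases \<tau>) auto
  have tt: "(x, y, z) \<in> triples w" using Suc.prems t by simp
  have xyz: "x < y" "y < z" "{x, y} \<in> invs w" "{y, z} \<in> invs w" using tt triples_char[OF dw] by auto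
  have inL: "{x, y} \<in> set (?Lv @ [?S0])" "{y, z} \<in> set (?Lv @ [?S0])" using xyz RPw L by auto
  have ne: "{x, y} \<noteq> {y, z}" using xyz by (auto simp: doubleton_eq_iff)
  show ?case
  proof (cases "{x, y} = ?S0")
    case True
    then have "{y, z} \<in> set ?Lv" using inL ne by auto
    then obtain J where J: "J < length ?Lv" "?Lv ! J = {z, y}" by (metis in_set_conv_nth insert_commute)
    have "Gamma n (a_max w) (x, y, z) = (if J < length ?Lv then 1 else 0)"
      using Gamma_idx[of "a_max w" n "length ?Lv" J y x z] L dL J True st
      by (simp add: nth_append insert_commute)
    then show ?thesis using J t by simp
  next
    case False
    show ?thesis
    proof (cases "{y, z} = ?S0")
      case True
      then have zy: "z = w ! (?m - 1)" "y = w ! ?m" using xyz m1 by (auto simp: doubleton_eq_iff)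
      obtain j k where jk: "j < k" "k < length w" "w ! j = y" "w ! k = x" using invs_ord[OF dw xyz(3) xyz(1)] by blast
      have "j = ?m" using jk zy nth_eq_iff_index_eq[OF dw, of j "?m"] m1 by simp
      then have "w ! ?m < w ! k" using suffix_inc[OF dw mmax, of ?m k] jk by simp
      then show ?thesis using jk zy xyz by simp
    next
      case False2: False
      have inv: "{x, y} \<in> invs ?v" "{y, z} \<in> invs ?v" using inL False False2 RPv by auto
      have tv: "(x, y, z) \<in> triples ?v" using triples_char[OF is_perm_distinct[OF pv]] inv xyz by simp
      have IH: "Gamma n (a_max ?v) (x, y, z) = 1" using Suc.IH[OF pv nv tv] .
      obtain I where I: "I < length ?Lv" "?Lv ! I = {y, x}"
        using inv RPv by (metis in_set_conv_nth insert_commute)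
      obtain J where J: "J < length ?Lv" "?Lv ! J = {z, y}"
        using inv RPv by (metis in_set_conv_nth insert_commute)
      have "Gamma n (a_max ?v) (x, y, z) = (if J < I then 1 else 0)"
        using Gamma_idx[of "a_max ?v" n I J y x z] RPv I J by simp
      moreover have "Gamma n (a_max w) (x, y, z) = (if J < I then 1 else 0)"
        using Gamma_idx[of "a_max w" n I J y x z] L dL I J st by (simp add: nth_append)
      ultimately show ?thesis using IH t by simp
    qed
  qed
qed



lemma comm_star_sym: "comm_step\<^sup>*\<^sup>* a b \<Longrightarrow> comm_step\<^sup>*\<^sup>* b a"
  by (induction rule: rtranclp_induct) (auto intro: converse_rtranclp_into_rtranclp comm_step_sym)

lemma comm_class_eq: "(comm_class a = comm_class b) = comm_step\<^sup>*\<^sup>* a b"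
proof
  assume h: "comm_class a = comm_class b"
  have "b \<in> comm_class b" unfolding comm_class_def by simp
  then have "b \<in> comm_class a" using h by simp
  then show "comm_step\<^sup>*\<^sup>* a b" unfolding comm_class_def by simp
next
  assume h: "comm_step\<^sup>*\<^sup>* a b"
  show "comm_class a = comm_class b" unfolding comm_class_def
    using h comm_star_sym[OF h] by (auto intro: rtranclp_trans)
qed

lemma finite_Dset[simp]: "finite (Dset n w a b)"
  unfolding Dset_def by simp

lemma Dset_sym: "Dset n w a b = Dset n w b a"
  unfolding Dset_def by auto

lemma Dset_tri: "Dset n w a c \<subseteq> Dset n w a b \<union> Dset n w b c"
  unfolding Dset_def by auto

lemma Dset_comm: "comm_step\<^sup>*\<^sup>* a a' \<Longrightarrow> a \<in> reduced_words n w \<Longrightarrow> Dset n w a' b = Dset n w a b"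
  unfolding Dset_def using comm_star_Gamma by fastforce

lemma braid_card:
  assumes "braid_step a b" "a \<in> reduced_words n w"
  shows "card (Dset n w a b) \<le> 1"
  using assms
proof (induction rule: braid_step.induct)
  case (1 xs i ys)
  from braid_Gamma[OF 1] obtain \<tau>0 where
    "\<forall>\<tau> \<in> triples w. \<tau> \<noteq> \<tau>0 \<longrightarrow> Gamma n (xs @ [i, i + 1, i] @ ys) \<tau> = Gamma n (xs @ [i + 1, i, i + 1] @ ys) \<tau>"
    by blast
  then have "Dset n w (xs @ [i, i + 1, i] @ ys) (xs @ [i + 1, i, i + 1] @ ys) \<subseteq> {\<tau>0}"
    unfolding Dset_def by blast
  then show ?case using card_mono[of "{\<tau>0}"] by fastforce
next
  case (2 xs i ys)
  have b: "xs @ [i, i + 1, i] @ ys \<in> reduced_words n w" using braid_red[of _ xs i ys] 2 by blast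
  from braid_Gamma[OF b] obtain \<tau>0 where
    "\<forall>\<tau> \<in> triples w. \<tau> \<noteq> \<tau>0 \<longrightarrow> Gamma n (xs @ [i, i + 1, i] @ ys) \<tau> = Gamma n (xs @ [i + 1, i, i + 1] @ ys) \<tau>"
    by blast
  then have "Dset n w (xs @ [i + 1, i, i + 1] @ ys) (xs @ [i, i + 1, i] @ ys) \<subseteq> {\<tau>0}"
    unfolding Dset_def by fastforce
  then show ?case using card_mono[of "{\<tau>0}"] by fastforce
qed

lemma lower:
  "(C_adj n w ^^ k) A B \<Longrightarrow> A = comm_class a \<Longrightarrow> B = comm_class b \<Longrightarrow> a \<in> reduced_words n w
   \<Longrightarrow> b \<in> reduced_words n w \<Longrightarrow> card (Dset n w a b) \<le> k"
proof (induction k arbitrary: B b)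
  case 0
  then have "comm_class a = comm_class b" by simp
  then have "comm_step\<^sup>*\<^sup>* a b" using comm_class_eq by blast
  then have "Dset n w a b = Dset n w a a" using Dset_comm[of a b n w a] 0 Dset_sym by metis
  then show ?case unfolding Dset_def by simp
next
  case (Suc k)
  from Suc.prems(1) obtain M where M: "(C_adj n w ^^ k) A M" "C_adj n w M B" by (rule relpowp_Suc_E)
  from M(2) have "M \<in> C_vertices n w" unfolding C_adj_def by blast
  then obtain c where c: "c \<in> reduced_words n w" "M = comm_class c" unfolding C_vertices_def by blast
  have IH: "card (Dset n w a c) \<le> k" using Suc.IH[OF M(1) Suc.prems(2) c(2) Suc.prems(4) c(1)] .
  from M(2) obtain c' b' where cb: "c' \<in> M" "b' \<in> B" "braid_step c' b'" unfolding C_adj_def by blast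
  have cc: "comm_step\<^sup>*\<^sup>* c c'" using cb(1) c(2) unfolding comm_class_def by simp
  have bb: "comm_step\<^sup>*\<^sup>* b b'" using cb(2) Suc.prems(3) unfolding comm_class_def by simp
  have c'R: "c' \<in> reduced_words n w" using comm_star_red[OF cc c(1)] .
  have "Dset n w c b = Dset n w c' b'"
    using Dset_comm[OF cc c(1), of b] Dset_comm[OF bb Suc.prems(5), of c'] Dset_sym by metis
  then have "card (Dset n w c b) \<le> 1" using braid_card[OF cb(3) c'R] by simp
  moreover have "card (Dset n w a b) \<le> card (Dset n w a c) + card (Dset n w c b)"
    using card_mono[OF _ Dset_tri[of n w a b c]] card_Un_le[of "Dset n w a c" "Dset n w c b"] by simp
  ultimately show ?case using IH by simp
qed

lemma vert: "a \<in> reduced_words n w \<Longrightarrow> comm_class a \<in> C_vertices n w"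
  unfolding C_vertices_def by simp

lemma supp_comm: "comm_step\<^sup>*\<^sup>* a b \<Longrightarrow> a \<in> reduced_words n w \<Longrightarrow> supp n w b = supp n w a"
  unfolding supp_def using comm_star_Gamma by fastforce

lemma path_RD:
  "RD a b \<Longrightarrow> a \<in> reduced_words n w \<Longrightarrow> card (supp n w b) \<le> card (supp n w a) \<and>
     (C_adj n w ^^ (card (supp n w a) - card (supp n w b))) (comm_class b) (comm_class a)"
proof (induction rule: rtranclp_induct)
  case base then show ?case by (simp add: relpowp_0_I)
next
  case (step b c)
  have bR: "b \<in> reduced_words n w" using RD_red[OF step(1,4)] .
  have IH: "card (supp n w b) \<le> card (supp n w a)"
    "(C_adj n w ^^ (card (supp n w a) - card (supp n w b))) (comm_class b) (comm_class a)"
    using step by auto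
  show ?case
  proof (cases "comm_step b c")
    case True
    then have h: "comm_step\<^sup>*\<^sup>* b c" by simp
    have e1: "comm_class c = comm_class b" using comm_class_eq[of c b] comm_star_sym[OF h] by simp
    have e2: "supp n w c = supp n w b" using supp_comm[OF h bR] .
    show ?thesis using IH unfolding e1 e2 by simp
  next
    case False
    then have "dstep b c" using step(2) by simp
    then obtain xs i ys where e: "b = xs @ [i + 1, i, i + 1] @ ys" "c = xs @ [i, i + 1, i] @ ys"
      unfolding dstep_def by (elim exE conjE)
    have cR: "c \<in> reduced_words n w" using braid_red[OF e(2) e(1)] bR by simp
    have cR': "xs @ [i, i + 1, i] @ ys \<in> reduced_words n w" using cR e by simp
    have "\<exists>\<tau>0. \<tau>0 \<in> triples w \<and> Gamma n c \<tau>0 = 0 \<and> Gamma n b \<tau>0 = 1 \<and>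
        (\<forall>\<tau> \<in> triples w. \<tau> \<noteq> \<tau>0 \<longrightarrow> Gamma n c \<tau> = Gamma n b \<tau>)"
      unfolding e by (rule exI, rule braid_Gamma[OF cR'])
    then obtain \<tau>0 where t0: "\<tau>0 \<in> triples w" "Gamma n c \<tau>0 = 0" "Gamma n b \<tau>0 = 1"
      and oth: "\<forall>\<tau> \<in> triples w. \<tau> \<noteq> \<tau>0 \<longrightarrow> Gamma n c \<tau> = Gamma n b \<tau>" by blast
    have sc: "supp n w c = supp n w b - {\<tau>0}" and tb: "\<tau>0 \<in> supp n w b"
      unfolding supp_def using t0 oth by auto
    have fin: "finite (supp n w b)" unfolding supp_def by simp
    have cs1: "card (supp n w c) = card (supp n w b) - 1" using sc card_Diff_singleton[OF tb] by simp
    have cs2: "card (supp n w b) \<ge> 1" using tb fin card_gt_0_iff[of "supp n w b"] by auto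
    have ne: "comm_class c \<noteq> comm_class b"
    proof
      assume "comm_class c = comm_class b"
      then have "comm_step\<^sup>*\<^sup>* c b" using comm_class_eq by blast
      then show False using comm_star_Gamma[of c b n w \<tau>0] cR t0 by simp
    qed
    have bs: "braid_step c b" using braid_step.intros(1)[of xs i ys] e by simp
    have cc: "c \<in> comm_class c" "b \<in> comm_class b" unfolding comm_class_def by simp_all
    have adj: "C_adj n w (comm_class c) (comm_class b)"
      unfolding C_adj_def using vert[OF cR] vert[OF bR] ne bs cc by blast
    have "card (supp n w a) - card (supp n w c) = Suc (card (supp n w a) - card (supp n w b))"
      using cs1 cs2 IH(1) by simp
    then show ?thesis using relpowp_Suc_I2[OF adj IH(2)] IH(1) cs1 by simp
  qed
qed

lemma path_RU:
  "RU a b \<Longrightarrow> a \<in> reduced_words n w \<Longrightarrow> card (supp n w a) \<le> card (supp n w b) \<and>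
     (C_adj n w ^^ (card (supp n w b) - card (supp n w a))) (comm_class a) (comm_class b)"
proof (induction rule: rtranclp_induct)
  case base then show ?case by (simp add: relpowp_0_I)
next
  case (step b c)
  have bR: "b \<in> reduced_words n w" using RU_red[OF step(1,4)] .
  have IH: "card (supp n w a) \<le> card (supp n w b)"
    "(C_adj n w ^^ (card (supp n w b) - card (supp n w a))) (comm_class a) (comm_class b)"
    using step by auto
  show ?case
  proof (cases "comm_step b c")
    case True
    then have h: "comm_step\<^sup>*\<^sup>* b c" by simp
    have e1: "comm_class c = comm_class b" using comm_class_eq[of c b] comm_star_sym[OF h] by simp
    have e2: "supp n w c = supp n w b" using supp_comm[OF h bR] .
    show ?thesis using IH unfolding e1 e2 by simp
  next
    case False
    then have "ustep b c" using step(2) by simp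
    then obtain xs i ys where e: "b = xs @ [i, i + 1, i] @ ys" "c = xs @ [i + 1, i, i + 1] @ ys"
      unfolding ustep_def by (elim exE conjE)
    have cR: "c \<in> reduced_words n w" using braid_red[OF e(1) e(2)] bR by simp
    have bR': "xs @ [i, i + 1, i] @ ys \<in> reduced_words n w" using bR e by simp
    have "\<exists>\<tau>0. \<tau>0 \<in> triples w \<and> Gamma n b \<tau>0 = 0 \<and> Gamma n c \<tau>0 = 1 \<and>
        (\<forall>\<tau> \<in> triples w. \<tau> \<noteq> \<tau>0 \<longrightarrow> Gamma n b \<tau> = Gamma n c \<tau>)"
      unfolding e by (rule exI, rule braid_Gamma[OF bR'])
    then obtain \<tau>0 where t0: "\<tau>0 \<in> triples w" "Gamma n b \<tau>0 = 0" "Gamma n c \<tau>0 = 1"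
      and oth: "\<forall>\<tau> \<in> triples w. \<tau> \<noteq> \<tau>0 \<longrightarrow> Gamma n b \<tau> = Gamma n c \<tau>" by blast
    have sc: "supp n w c = insert \<tau>0 (supp n w b)" and tb: "\<tau>0 \<notin> supp n w b"
      unfolding supp_def using t0 oth by auto
    have fin: "finite (supp n w b)" unfolding supp_def by simp
    have cs: "card (supp n w c) = Suc (card (supp n w b))"
      using sc tb fin by simp
    have ne: "comm_class b \<noteq> comm_class c"
    proof
      assume "comm_class b = comm_class c"
      then have "comm_step\<^sup>*\<^sup>* b c" using comm_class_eq by blast
      then show False using comm_star_Gamma[of b c n w \<tau>0] bR t0 by simp
    qed
    have bs: "braid_step b c" using braid_step.intros(1)[of xs i ys] e by simp
    have cc: "c \<in> comm_class c" "b \<in> comm_class b" unfolding comm_class_def by simp_all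
    have adj: "C_adj n w (comm_class b) (comm_class c)"
      unfolding C_adj_def using vert[OF cR] vert[OF bR] ne bs cc by blast
    have "card (supp n w c) - card (supp n w a) = Suc (card (supp n w b) - card (supp n w a))"
      using cs IH(1) by simp
    then show ?thesis using relpowp_Suc_I[OF IH(2) adj] IH(1) cs by simp
  qed
qed

lemma dist_eq:
  assumes "a \<in> reduced_words n w" "b \<in> reduced_words n w"
    "(C_adj n w ^^ card (Dset n w a b)) (comm_class a) (comm_class b)"
  shows "C_dist n w (comm_class a) (comm_class b) = card (Dset n w a b)"
  unfolding C_dist_def
proof (rule Least_equality)
  show "(C_adj n w ^^ card (Dset n w a b)) (comm_class a) (comm_class b)" by fact
  fix k assume "(C_adj n w ^^ k) (comm_class a) (comm_class b)"
  then show "card (Dset n w a b) \<le> k" using lower assms(1,2) by blast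
qed

lemma part_min:
  assumes pw: "is_perm n w" and a: "a \<in> reduced_words n w"
  shows "C_dist n w (comm_class (a_min w)) (comm_class a) = card (supp n w a)
    \<and> Dset n w (a_min w) a = supp n w a"
proof -
  have am: "a_min w \<in> reduced_words n w" using amin_red[OF pw] .
  have G0: "\<And>\<tau>. \<tau> \<in> triples w \<Longrightarrow> Gamma n (a_min w) \<tau> = 0" using Gamma_amin[OF pw refl] by blast
  have D: "Dset n w (a_min w) a = supp n w a"
    unfolding Dset_def supp_def by (intro Collect_cong) (metis G0 Gamma_01 zero_neq_one)
  have s0: "supp n w (a_min w) = {}" unfolding supp_def using G0 by auto
  have "(C_adj n w ^^ card (supp n w a)) (comm_class (a_min w)) (comm_class a)"
    using path_RD[OF S_min[OF a] a] s0 by simp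
  then show ?thesis using dist_eq[OF am a] D by simp
qed

lemma part_max:
  assumes pw: "is_perm n w" and a: "a \<in> reduced_words n w"
  shows "C_dist n w (comm_class a) (comm_class (a_max w)) = card (triples w) - card (supp n w a)
    \<and> card (Dset n w a (a_max w)) = card (triples w) - card (supp n w a)"
proof -
  have am: "a_max w \<in> reduced_words n w" using amax_red[OF pw] .
  have G1: "\<And>\<tau>. \<tau> \<in> triples w \<Longrightarrow> Gamma n (a_max w) \<tau> = 1" using Gamma_amax[OF pw refl] by blast
  have D: "Dset n w a (a_max w) = triples w - supp n w a"
    unfolding Dset_def supp_def by (auto simp: G1)
  have cD: "card (Dset n w a (a_max w)) = card (triples w) - card (supp n w a)"
    unfolding D by (rule card_Diff_subset) (auto simp: supp_def)
  have s1: "supp n w (a_max w) = triples w" unfolding supp_def using G1 by auto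
  have "(C_adj n w ^^ card (Dset n w a (a_max w))) (comm_class a) (comm_class (a_max w))"
    using path_RU[OF S_max[OF a] a] s1 cD by simp
  then show ?thesis using dist_eq[OF a am] cD by simp
qed

theorem mainTheorem7:
  fixes n :: nat and w a :: "nat list"
  assumes "is_perm n w" and "a \<in> reduced_words n w"
  shows "C_dist n w (comm_class (a_min w)) (comm_class a) = t_dist n w (a_min w) a
       \<and> t_dist n w (a_min w) a = card (supp n w a)
       \<and> C_dist n w (comm_class a) (comm_class (a_max w)) = t_dist n w a (a_max w)
       \<and> t_dist n w a (a_max w) = card (triples w) - card (supp n w a)
       \<and> C_dist n w (comm_class (a_min w)) (comm_class (a_max w)) = card (triples w)"
proof -
  have t: "t_dist n w x y = card (Dset n w x y)" for x y unfolding t_dist_def Dset_def by simp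
  note P1 = part_min[OF assms] and P2 = part_max[OF assms]
  have P3: "C_dist n w (comm_class (a_min w)) (comm_class (a_max w)) = card (supp n w (a_max w))"
    using part_min[OF assms(1) amax_red[OF assms(1)]] by simp
  have s1: "supp n w (a_max w) = triples w" unfolding supp_def using Gamma_amax[OF assms(1) refl] by auto
  show ?thesis using P1 P2 P3 s1 t by simp
qed


end
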